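(* Let $C$ be a cycle of goods with at most $8$ goods and let three agents have arbitrary utility functions on $C$. Then an mms-allocation of the goods of $C$ to the three agents exists.
   Context: A cycle of goods has goods $v_1,\dots,v_m$ as vertices and edges $v_iv_{i+1}$ ($1\le i<m$) and $v_mv_1$. A utility function assigns a non-negative real to each good, extended additively to sets. A bundle is a set of goods inducing a connected subgraph (empty allowed); an $n$-split is a sequence of $n$ pairwise disjoint bundles (possibly empty) with union all goods. $\mathrm{mms}^{(n)}(C,u)=\max_{P_1,\dots,P_n}\min_i u(P_i)$ over all $n$-splits. An allocation to agents $1,\dots,n$ with utilities $u_1,\dots,u_n$ is an $n$-split $P_1,\dots,P_n$ with $P_i$ given to agent $i$; it is an mms-allocation if $u_i(P_i)\ge\mathrm{mms}^{(n)}(C,u_i)$ for all $i$. *)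

theory Defs
  imports Complex_Main
begin

text \<open>The cycle of goods C_m: goods are 0,...,m-1 (good v_(i+1) is represented by i);
  edges join i and (i+1) mod m.\<close>

definition cyc_adj :: "nat \<Rightarrow> nat \<Rightarrow> nat \<Rightarrow> bool" where
  "cyc_adj m i j \<longleftrightarrow> i < m \<and> j < m \<and> (j = Suc i mod m \<or> i = Suc j mod m)"

definition is_bundle :: "nat \<Rightarrow> nat set \<Rightarrow> bool" where
  "is_bundle m B \<longleftrightarrow> B \<subseteq> {..<m} \<and>
     (\<forall>x\<in>B. \<forall>y\<in>B. (x, y) \<in> {(a, b). a \<in> B \<and> b \<in> B \<and> cyc_adj m a b}\<^sup>*)"

definition is_split :: "nat \<Rightarrow> nat \<Rightarrow> (nat \<Rightarrow> nat set) \<Rightarrow> bool" where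
  "is_split m n P \<longleftrightarrow> (\<forall>i<n. is_bundle m (P i)) \<and>
     (\<forall>i<n. \<forall>j<n. i \<noteq> j \<longrightarrow> P i \<inter> P j = {}) \<and>
     (\<Union>i<n. P i) = {..<m}"

definition util :: "(nat \<Rightarrow> real) \<Rightarrow> nat set \<Rightarrow> real" where
  "util u S = (\<Sum>g\<in>S. u g)"

definition mms :: "nat \<Rightarrow> nat \<Rightarrow> (nat \<Rightarrow> real) \<Rightarrow> real" where
  "mms m n u = Max {(MIN i\<in>{..<n}. util u (P i)) | P. is_split m n P}"

definition is_mms_allocation :: "nat \<Rightarrow> nat \<Rightarrow> (nat \<Rightarrow> nat \<Rightarrow> real) \<Rightarrow> (nat \<Rightarrow> nat set) \<Rightarrow> bool" where
  "is_mms_allocation m n us P \<longleftrightarrow> is_split m n P \<and>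
     (\<forall>i<n. util (us i) (P i) \<ge> mms m n (us i))"

end

theory Submission
  imports Defs
begin


definition arc :: "nat \<Rightarrow> nat \<Rightarrow> nat \<Rightarrow> nat set" where
  "arc m s l = (\<lambda>t. (s + t) mod m) ` {..<l}"

lemma arc_0[simp]: "arc m s 0 = {}" by (simp add: arc_def)

lemma arc_sub: "0 < m \<Longrightarrow> arc m s l \<subseteq> {..<m}" by (auto simp: arc_def)

lemma arc_mod: "arc m (s mod m) l = arc m s l"
  by (simp add: arc_def mod_add_left_eq)

lemma arc_full: assumes "0 < m" shows "arc m s m = {..<m}"
proof
  show "arc m s m \<subseteq> {..<m}" using assms by (rule arc_sub)
  show "{..<m} \<subseteq> arc m s m"
  proof
    fix x assume "x \<in> {..<m}"
    hence x: "x < m" by simp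
    define t where "t = (x + (m - s mod m)) mod m"
    have "t < m" using assms by (simp add: t_def)
    moreover have "(s + t) mod m = x"
    proof -
      have "(s + t) mod m = (s mod m + (x + (m - s mod m))) mod m"
        by (simp add: t_def mod_add_left_eq mod_add_right_eq)
      also have "\<dots> = (x + m) mod m" using mod_less_divisor[OF assms, of s] by simp
      also have "\<dots> = x" using x by simp
      finally show ?thesis .
    qed
    ultimately show "x \<in> arc m s m" unfolding arc_def by force
  qed
qed

lemma arc_add: "arc m s (a + b) = arc m s a \<union> arc m (s + a) b"
proof -
  have "{..<a+b} = {..<a} \<union> (\<lambda>t. a + t) ` {..<b}"
  proof (rule set_eqI)
    fix x show "x \<in> {..<a+b} \<longleftrightarrow> x \<in> {..<a} \<union> (\<lambda>t. a + t) ` {..<b}"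
    proof
      assume "x \<in> {..<a+b}"
      thus "x \<in> {..<a} \<union> (\<lambda>t. a + t) ` {..<b}"
        by (cases "x < a") (auto intro!: image_eqI[of _ _ "x - a"])
    qed auto
  qed
  thus ?thesis by (auto simp: arc_def image_Un image_image add.assoc)
qed

lemma mod_inj_aux: assumes "x < m" "y < m" "(s + x) mod m = (s + y) mod (m::nat)" shows "x = y"
proof -
  have k: "x = y" if h: "x < m" "y < m" "x \<le> y" "(s + y) mod m = (s + x) mod m" for x y
  proof -
    have "s + x \<le> s + y" using h(3) by simp
    hence "m dvd (s + y) - (s + x)" using mod_eq_dvd_iff_nat[of "s+x" "s+y" m] h(4) by simp
    hence d: "m dvd y - x" by simp
    show "x = y"
    proof (rule ccontr)
      assume "x \<noteq> y"
      hence "0 < y - x" using h(3) by simp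
      hence "m \<le> y - x" using d by (rule dvd_imp_le[rotated])
      thus False using h(2) by simp
    qed
  qed
  show ?thesis
  proof (cases "x \<le> y")
    case True thus ?thesis using k[of x y] assms by simp
  next
    case False thus ?thesis using k[of y x] assms by simp
  qed
qed

lemma arc_inj: assumes "l \<le> (m::nat)" shows "inj_on (\<lambda>t. (s + t) mod m) {..<l}"
proof (rule inj_onI)
  fix x y assume h: "x \<in> {..<l}" "y \<in> {..<l}" "(s + x) mod m = (s + y) mod m"
  have "x < m" "y < m" using h(1,2) assms by auto
  thus "x = y" using h(3) by (rule mod_inj_aux)
qed

lemma arc_card: "l \<le> m \<Longrightarrow> card (arc m s l) = l"
  unfolding arc_def by (simp add: card_image arc_inj)

lemma arc_finite[simp]: "finite (arc m s l)" by (simp add: arc_def)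

lemma arc_disj: assumes "a + b \<le> m" shows "arc m s a \<inter> arc m (s + a) b = {}"
proof -
  have "card (arc m s a) + card (arc m (s + a) b) = card (arc m s a \<union> arc m (s + a) b) + card (arc m s a \<inter> arc m (s + a) b)"
    by (rule card_Un_Int) auto
  moreover have "card (arc m s a \<union> arc m (s + a) b) = a + b"
    using arc_card[OF assms, of s] by (simp add: arc_add)
  moreover have "card (arc m s a) = a" "card (arc m (s+a) b) = b" using assms by (simp_all add: arc_card)
  ultimately have "card (arc m s a \<inter> arc m (s + a) b) = 0" by simp
  thus ?thesis by simp
qed

lemma arc_compl: assumes "0 < m" "a \<le> m" shows "{..<m} - arc m s a = arc m (s + a) (m - a)"
proof -
  have "arc m s m = arc m s a \<union> arc m (s + a) (m - a)" using arc_add[of m s a "m - a"] assms by simp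
  moreover have "arc m s a \<inter> arc m (s + a) (m - a) = {}" using arc_disj[of a "m-a" m s] assms by simp
  ultimately show ?thesis using arc_full[OF assms(1), of s] by blast
qed

lemma arc_start: assumes "0 < m" "x \<in> arc m s l" "(x + m - 1) mod m \<notin> arc m s l"
  shows "x = s mod m"
proof -
  obtain t where t: "t < l" "x = (s + t) mod m" using assms(2) by (auto simp: arc_def)
  show ?thesis
  proof (cases t)
    case 0 thus ?thesis using t by simp
  next
    case (Suc t')
    have "(x + m - 1) mod m = ((s + t) mod m + (m - 1)) mod m" using t assms(1) by simp
    also have "\<dots> = (s + t + (m - 1)) mod m" by (simp add: mod_add_left_eq)
    also have "s + t + (m - 1) = (s + t') + m" using Suc assms(1) by simp
    also have "(s + t' + m) mod m = (s + t') mod m" by simp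
    finally have "(x + m - 1) mod m \<in> arc m s l" using t Suc unfolding arc_def by auto
    thus ?thesis using assms(3) by simp
  qed
qed

lemma cyc_adj_sym: "cyc_adj m a b \<longleftrightarrow> cyc_adj m b a" by (auto simp: cyc_adj_def)

lemma arc_bundle: assumes "0 < m" shows "is_bundle m (arc m s l)"
proof -
  let ?B = "arc m s l"
  let ?R = "{(a, b). a \<in> ?B \<and> b \<in> ?B \<and> cyc_adj m a b}"
  have symR: "sym ?R" unfolding sym_def cyc_adj_def by auto
  have base: "t < l \<Longrightarrow> (s mod m, (s + t) mod m) \<in> ?R\<^sup>*" for t
  proof (induction t)
    case 0 thus ?case by simp
  next
    case (Suc t)
    hence IH: "(s mod m, (s + t) mod m) \<in> ?R\<^sup>*" by simp
    have i1: "(s + t) mod m \<in> ?B" using Suc.prems unfolding arc_def by (intro image_eqI[of _ _ t]) auto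
    have i2: "(s + Suc t) mod m \<in> ?B" using Suc.prems unfolding arc_def by (intro image_eqI[of _ _ "Suc t"]) auto
    have "((s + t) mod m, (s + Suc t) mod m) \<in> ?R"
      using i1 i2 assms by (auto simp: cyc_adj_def mod_Suc_eq)
    thus ?case by (rule rtrancl_into_rtrancl[OF IH])
  qed
  have symRs: "sym (?R\<^sup>*)" using symR by (rule sym_rtrancl)
  have conn: "(x, y) \<in> ?R\<^sup>*" if xy: "x \<in> ?B" "y \<in> ?B" for x y
  proof -
    obtain t1 where t1: "t1 \<in> {..<l}" "x = (s + t1) mod m" using xy(1) unfolding arc_def by (rule imageE)
    obtain t2 where t2: "t2 \<in> {..<l}" "y = (s + t2) mod m" using xy(2) unfolding arc_def by (rule imageE)
    have 1: "(s mod m, x) \<in> ?R\<^sup>*" unfolding t1(2) using t1(1) by (intro base) simp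
    have 2: "(s mod m, y) \<in> ?R\<^sup>*" unfolding t2(2) using t2(1) by (intro base) simp
    have 3: "(x, s mod m) \<in> ?R\<^sup>*" using 1 symRs by (rule symD[rotated])
    show ?thesis using 3 2 by (rule rtrancl_trans)
  qed
  show ?thesis unfolding is_bundle_def
    apply (intro conjI ballI)
     apply (rule arc_sub[OF assms])
    apply (rule conn)
     apply assumption+
    done
qed

lemma bundle_arc: assumes m0: "0 < m" and bun: "is_bundle m B" shows "\<exists>s<m. \<exists>l\<le>m. B = arc m s l"
proof (cases "B = {..<m}")
  case True
  hence "0 < m \<and> m \<le> m \<and> B = arc m 0 m" using arc_full[OF m0, of 0] m0 by simp
  thus ?thesis by blast
next
  case notfull: False
  have Bsub: "B \<subseteq> {..<m}" using bun by (simp add: is_bundle_def)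
  then obtain g where g: "g < m" "g \<notin> B" using notfull by blast
  show ?thesis
  proof (cases "B = {}")
    case True
    hence "0 < m \<and> 0 \<le> m \<and> B = arc m 0 0" using m0 by simp
    thus ?thesis by blast
  next
    case nonempty: False
    define pos where "pos x = (x + m - Suc g) mod m" for x
    define f where "f t = (Suc g + t) mod m" for t
    have sg: "Suc g \<le> m" using g by simp
    have fpos: "f (pos x) = x" if "x < m" for x
    proof -
      have "f (pos x) = (Suc g + (x + m - Suc g)) mod m" unfolding f_def pos_def by (simp only: mod_add_right_eq)
      also have "Suc g + (x + m - Suc g) = x + m" using sg by simp
      finally show ?thesis using that by simp
    qed
    have posf: "pos (f t) = t" if "t < m" for t
    proof -
      have "pos (f t) = ((Suc g + t) mod m + (m - Suc g)) mod m" unfolding f_def pos_def using sg by simp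
      also have "\<dots> = (Suc g + t + (m - Suc g)) mod m" by (simp add: mod_add_left_eq)
      also have "Suc g + t + (m - Suc g) = t + m" using sg by simp
      finally show ?thesis using that by simp
    qed
    have pos_lt: "pos x < m" for x unfolding pos_def using m0 by simp
    have posg: "pos g = m - 1" unfolding pos_def using g by simp
    have posstep: "pos b = Suc (pos a)" if ab: "a < m" "b < m" "a \<noteq> g" "b = Suc a mod m" for a b
    proof -
      have "pos a \<noteq> m - 1"
      proof
        assume "pos a = m - 1"
        hence "f (pos a) = f (pos g)" using posg by simp
        thus False using fpos[OF ab(1)] fpos[OF g(1)] ab(3) by simp
      qed
      hence lt: "Suc (pos a) < m" using pos_lt[of a] by simp
      have "pos b = (Suc a mod m + (m - Suc g)) mod m" unfolding pos_def ab(4) using sg by simp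
      also have "\<dots> = (Suc a + (m - Suc g)) mod m" by (simp add: mod_add_left_eq)
      also have "Suc a + (m - Suc g) = Suc (a + m - Suc g)" using sg by simp
      also have "Suc (a + m - Suc g) mod m = Suc (pos a) mod m" unfolding pos_def by (simp add: mod_Suc_eq)
      finally show ?thesis using lt by simp
    qed
    let ?R = "{(a, b). a \<in> B \<and> b \<in> B \<and> cyc_adj m a b}"
    have finB: "finite B" using Bsub finite_subset by blast
    define p where "p = Min (pos ` B)"
    define q where "q = Max (pos ` B)"
    have pB: "p \<in> pos ` B" unfolding p_def using finB nonempty by simp
    have qB: "q \<in> pos ` B" unfolding q_def using finB nonempty by simp
    have pq: "pos ` B = {p..q}"
    proof
      show "pos ` B \<subseteq> {p..q}" unfolding p_def q_def using finB by auto
      show "{p..q} \<subseteq> pos ` B"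
      proof
        fix r assume r: "r \<in> {p..q}"
        show "r \<in> pos ` B"
        proof (rule ccontr)
          assume nr: "r \<notin> pos ` B"
          obtain x0 where x0: "x0 \<in> B" "pos x0 = p" using pB by auto
          obtain y0 where y0: "y0 \<in> B" "pos y0 = q" using qB by auto
          have "p < r" using r pB nr by (cases "p = r") auto
          have conn: "\<forall>x\<in>B. \<forall>y\<in>B. (x, y) \<in> ?R\<^sup>*" using bun unfolding is_bundle_def by simp
          have reach: "(x0, y0) \<in> ?R\<^sup>*" using conn x0(1) y0(1) by simp
          have "pos y < r" if "(x0, y) \<in> ?R\<^sup>*" for y
            using that
          proof (induction rule: rtrancl_induct)
            case base thus ?case using x0 \<open>p < r\<close> by simp
          next
            case (step a b)
            have ab: "a \<in> B" "b \<in> B" "cyc_adj m a b" using step.hyps(2) by auto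
            have am: "a < m" "b < m" using ab Bsub by auto
            have ag: "a \<noteq> g" "b \<noteq> g" using ab g by auto
            from ab(3) have "b = Suc a mod m \<or> a = Suc b mod m" unfolding cyc_adj_def by auto
            thus ?case
            proof
              assume "b = Suc a mod m"
              hence "pos b = Suc (pos a)" using am ag by (intro posstep) auto
              moreover have "pos b \<noteq> r" using nr ab(2) by auto
              ultimately show ?thesis using step.IH by simp
            next
              assume "a = Suc b mod m"
              hence "pos a = Suc (pos b)" using am ag by (intro posstep) auto
              thus ?thesis using step.IH by simp
            qed
          qed
          hence "q < r" using reach y0 by auto
          thus False using r by simp
        qed
      qed
    qed
    have Bf: "B = f ` {p..q}"
    proof
      show "B \<subseteq> f ` {p..q}"
      proof
        fix x assume "x \<in> B"
        hence "x < m" "pos x \<in> {p..q}" using Bsub pq by auto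
        thus "x \<in> f ` {p..q}" using fpos by (metis image_eqI)
      qed
      show "f ` {p..q} \<subseteq> B"
      proof
        fix y assume "y \<in> f ` {p..q}"
        then obtain t where t: "t \<in> {p..q}" "y = f t" by auto
        have "t \<in> pos ` B" using t(1) pq by simp
        then obtain x where "t = pos x" "x \<in> B" by (rule imageE)
        thus "y \<in> B" using t fpos Bsub by auto
      qed
    qed
    have iv: "{p..q} = (\<lambda>t. p + t) ` {..<Suc q - p}"
    proof (rule set_eqI)
      fix x show "x \<in> {p..q} \<longleftrightarrow> x \<in> (\<lambda>t. p + t) ` {..<Suc q - p}"
      proof
        assume "x \<in> {p..q}" thus "x \<in> (\<lambda>t. p + t) ` {..<Suc q - p}"
          by (intro image_eqI[of _ _ "x - p"]) auto
      qed auto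
    qed
    have "B = arc m (Suc g + p) (Suc q - p)"
      unfolding Bf iv arc_def image_image f_def by (simp add: add.assoc)
    hence "B = arc m ((Suc g + p) mod m) (Suc q - p)" by (simp add: arc_mod)
    moreover have "q < m" using qB pos_lt by auto
    ultimately have "(Suc g + p) mod m < m \<and> Suc q - p \<le> m \<and> B = arc m ((Suc g + p) mod m) (Suc q - p)"
      using m0 by simp
    thus ?thesis by blast
  qed
qed

lemma lt3: "{..<(3::nat)} = {0, 1, 2}" by auto

lemma all3: "(\<forall>i<(3::nat). Q i) \<longleftrightarrow> Q 0 \<and> Q 1 \<and> Q 2"
proof -
  have "(\<forall>i<(3::nat). Q i) \<longleftrightarrow> (\<forall>i\<in>{..<3}. Q i)" by auto
  also have "\<dots> \<longleftrightarrow> Q 0 \<and> Q 1 \<and> Q 2" unfolding lt3 by simp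
  finally show ?thesis .
qed

lemma is_split3: "is_split m 3 P \<longleftrightarrow> is_bundle m (P 0) \<and> is_bundle m (P 1) \<and> is_bundle m (P 2) \<and>
   P 0 \<inter> P 1 = {} \<and> P 0 \<inter> P 2 = {} \<and> P 1 \<inter> P 2 = {} \<and> P 0 \<union> P 1 \<union> P 2 = {..<m}"
  unfolding is_split_def all3 lt3 by (auto simp: Un_assoc)

definition SPL :: "nat \<Rightarrow> (nat set \<times> nat set \<times> nat set) list" where
  "SPL m = [(arc m s a, arc m ((s + a) mod m) b, arc m ((s + a + b) mod m) (m - a - b)).
     s \<leftarrow> [0..<m], a \<leftarrow> [0..<m + 1], b \<leftarrow> [0..<m + 1 - a]]"

definition MONO :: "nat \<Rightarrow> (nat set \<times> nat set) list" where
  "MONO m = [(arc m s l, arc m s (l + 1)). s \<leftarrow> [0..<m], l \<leftarrow> [0..<m]] @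
            [(arc m ((s + 1) mod m) l, arc m s (l + 1)). s \<leftarrow> [0..<m], l \<leftarrow> [0..<m]]"

lemma cm_mem: "x \<in> set xs \<Longrightarrow> y \<in> set (f x) \<Longrightarrow> y \<in> set (concat (map f xs))" by auto

lemma cm_iff: "y \<in> set (concat (map f xs)) \<longleftrightarrow> (\<exists>x\<in>set xs. y \<in> set (f x))" by auto

definition T6 :: "nat \<Rightarrow> (nat \<times> nat \<times> nat \<times> nat \<times> nat \<times> nat) list" where
  "T6 m = [(s, a, (s + a) mod m, b, (s + a + b) mod m, m - a - b).
     s \<leftarrow> [0..<m], a \<leftarrow> [0..<m + 1], b \<leftarrow> [0..<m + 1 - a]]"

lemma SPL_alt: "SPL m = map (\<lambda>(s, a, s2, b, s3, c). (arc m s a, arc m s2 b, arc m s3 c)) (T6 m)"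
  unfolding SPL_def T6_def by (simp add: map_concat comp_def)

definition SPLH :: "nat \<Rightarrow> (nat set \<times> nat set \<times> nat set) list" where
  "SPLH m = map (\<lambda>(s, a, s2, b, s3, c). (arc m s a, arc m s2 b, arc m s3 c))
     (filter (\<lambda>(s, a, _). 0 < a \<and> (s = 0 \<or> m < s + a)) (T6 m))"

lemma SPLH_sub: "set (SPLH m) \<subseteq> set (SPL m)"
  unfolding SPLH_def SPL_alt set_map by (rule image_mono) simp

lemma SPLH_mem: assumes "s < m" "a + b \<le> m" "0 < a" "s = 0 \<or> m < s + a" shows
  "(arc m s a, arc m ((s + a) mod m) b, arc m ((s + a + b) mod m) (m - a - b)) \<in> set (SPLH m)"
proof -
  have "s \<in> set [0..<m]" "a \<in> set [0..<m + 1]" "b \<in> set [0..<m + 1 - a]" using assms by auto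
  hence "(s, a, (s + a) mod m, b, (s + a + b) mod m, m - a - b) \<in> set (T6 m)"
    unfolding T6_def by (intro cm_mem[of s] cm_mem[of a]) auto
  hence "(s, a, (s + a) mod m, b, (s + a + b) mod m, m - a - b) \<in> set (filter (\<lambda>(s, a, _). 0 < a \<and> (s = 0 \<or> m < s + a)) (T6 m))"
    using assms(3,4) by simp
  thus ?thesis unfolding SPLH_def by force
qed

lemma zero_in_arc: assumes "s < m" "0 \<in> arc m s l" shows "s = 0 \<or> m < s + l"
proof (rule ccontr)
  assume c: "\<not> (s = 0 \<or> m < s + l)"
  obtain t where t: "t < l" "0 = (s + t) mod m" using assms(2) unfolding arc_def by auto
  have "m dvd s + t" using t(2) by (simp add: dvd_eq_mod_eq_0)
  moreover have "0 < s + t" using c by simp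
  ultimately have "m \<le> s + t" by (rule dvd_imp_le)
  thus False using c t(1) by simp
qed

definition MP :: "nat \<Rightarrow> (nat \<times> nat \<times> nat \<times> nat) list" where
  "MP m = [(s, l, (s + 1) mod m, l + 1). s \<leftarrow> [0..<m], l \<leftarrow> [0..<m]]"

lemma MONO_alt: "MONO m = map (\<lambda>(s, l, s', l'). (arc m s l, arc m s l')) (MP m) @
   map (\<lambda>(s, l, s', l'). (arc m s' l, arc m s l')) (MP m)"
  unfolding MONO_def MP_def by (simp add: map_concat comp_def)

lemma SPL_mem: assumes "s < m" "a + b \<le> m" shows
  "(arc m s a, arc m ((s + a) mod m) b, arc m ((s + a + b) mod m) (m - a - b)) \<in> set (SPL m)"
proof -
  have "s \<in> set [0..<m]" "a \<in> set [0..<m + 1]" "b \<in> set [0..<m + 1 - a]" using assms by auto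
  thus ?thesis unfolding SPL_def by (intro cm_mem[of s] cm_mem[of a]) auto
qed

lemma SPL_split: assumes m0: "0 < m" and mem: "(X, Y, Z) \<in> set (SPL m)"
  shows "is_bundle m X \<and> is_bundle m Y \<and> is_bundle m Z \<and> X \<inter> Y = {} \<and> X \<inter> Z = {} \<and> Y \<inter> Z = {}
    \<and> X \<union> Y \<union> Z = {..<m}"
proof -
  have "\<exists>s\<in>{0..<m}. \<exists>a\<in>{0..<m + 1}. \<exists>b\<in>{0..<m + 1 - a}. (X, Y, Z) =
     (arc m s a, arc m ((s + a) mod m) b, arc m ((s + a + b) mod m) (m - a - b))"
    using mem unfolding SPL_def cm_iff set_map image_iff set_upt by blast
  then obtain s a b where sab0: "s \<in> {0..<m}" "a \<in> {0..<m + 1}" "b \<in> {0..<m + 1 - a}" "(X, Y, Z) =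
     (arc m s a, arc m ((s + a) mod m) b, arc m ((s + a + b) mod m) (m - a - b))" by blast
  have sab: "s < m" "a \<le> m" "b \<le> m - a" "X = arc m s a"
    "Y = arc m ((s + a) mod m) b" "Z = arc m ((s + a + b) mod m) (m - a - b)"
    using sab0 by auto
  have Y: "Y = arc m (s + a) b" using sab(5) by (simp add: arc_mod)
  have Z: "Z = arc m (s + (a + b)) (m - (a + b))" using sab(6) by (simp add: arc_mod add.assoc)
  have ab: "a + b \<le> m" using sab by simp
  have XY: "X \<union> Y = arc m s (a + b)" using sab(4) Y by (simp add: arc_add)
  have Zc: "Z = {..<m} - (X \<union> Y)" using Z XY arc_compl[OF m0 ab, of s] by simp
  have "X \<union> Y \<subseteq> {..<m}" using XY arc_sub[OF m0] by simp
  have d1: "X \<inter> Y = {}" using sab(4) Y arc_disj[OF ab] by simp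
  have b: "is_bundle m X" "is_bundle m Y" "is_bundle m Z" using sab(4) Y Z arc_bundle[OF m0] by simp_all
  have d2: "X \<inter> Z = {}" "Y \<inter> Z = {}" using Zc by auto
  have u: "X \<union> Y \<union> Z = {..<m}" using Zc \<open>X \<union> Y \<subseteq> {..<m}\<close> by auto
  show ?thesis using b d1 d2 u by simp
qed

lemma SPL_alloc1: "0 < m \<Longrightarrow> (X, Y, Z) \<in> set (SPL m) \<Longrightarrow>
  is_split m 3 (\<lambda>i. if i = 0 then X else if i = 1 then Y else Z)"
proof -
  assume a: "0 < m" "(X, Y, Z) \<in> set (SPL m)"
  note h = SPL_split[OF a]
  show ?thesis unfolding is_split3 using h by simp
qed

lemma SPL_alloc2: "0 < m \<Longrightarrow> (X, Y, Z) \<in> set (SPL m) \<Longrightarrow>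
  is_split m 3 (\<lambda>i. if i = 0 then X else if i = 1 then Z else Y)"
proof -
  assume a: "0 < m" "(X, Y, Z) \<in> set (SPL m)"
  note h = SPL_split[OF a]
  have "Z \<inter> Y = {}" "X \<union> Z \<union> Y = {..<m}" using h by auto
  thus ?thesis unfolding is_split3 using h by simp
qed

lemma MONO_sub: assumes "(X, Y) \<in> set (MONO m)" shows "X \<subseteq> Y"
proof -
  have 1: "arc m s l \<subseteq> arc m s (l + 1)" for s l using arc_add[of m s l 1] by simp
  have 2: "arc m ((s + 1) mod m) l \<subseteq> arc m s (l + 1)" for s l
    using arc_add[of m s 1 l] by (simp add: arc_mod add.commute)
  obtain s l where "X = arc m s l \<and> Y = arc m s (l + 1) \<or> X = arc m ((s + 1) mod m) l \<and> Y = arc m s (l + 1)"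
    using assms unfolding MONO_def by auto
  thus ?thesis using 1 2 by blast
qed

lemma split_sum: assumes "is_split m 3 P"
  shows "util u (P 0) + util u (P 1) + util u (P 2) = util u {..<m}"
proof -
  have h: "P 0 \<subseteq> {..<m}" "P 1 \<subseteq> {..<m}" "P 2 \<subseteq> {..<m}"
    "P 0 \<inter> P 1 = {}" "P 0 \<inter> P 2 = {}" "P 1 \<inter> P 2 = {}" "P 0 \<union> P 1 \<union> P 2 = {..<m}"
    using assms unfolding is_split3 is_bundle_def by auto
  have f: "finite (P 0)" "finite (P 1)" "finite (P 2)"
    using finite_subset[OF h(1) finite_lessThan] finite_subset[OF h(2) finite_lessThan]
      finite_subset[OF h(3) finite_lessThan] by auto
  have "util u {..<m} = util u (P 0 \<union> P 1) + util u (P 2)"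
    unfolding util_def h(7)[symmetric] using f h(5,6) by (subst sum.union_disjoint) auto
  also have "util u (P 0 \<union> P 1) = util u (P 0) + util u (P 1)"
    unfolding util_def using f h(4) by (subst sum.union_disjoint) auto
  finally show ?thesis by simp
qed

lemma util_mono: assumes "\<forall>g<m. 0 \<le> u g" "X \<subseteq> Y" "Y \<subseteq> {..<m}" shows "util u X \<le> util u Y"
  unfolding util_def using assms finite_subset[OF assms(3)] by (intro sum_mono2) auto

lemma mms_attained: assumes m0: "0 < m"
  shows "\<exists>P. is_split m 3 P \<and> mms m 3 u = (MIN i\<in>{..<3}. util u (P i))"
proof -
  let ?S = "{(MIN i\<in>{..<3}. util u (P i)) | P. is_split m 3 P}"
  have sub: "?S \<subseteq> util u ` Pow {..<m}"
  proof
    fix v assume "v \<in> ?S"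
    then obtain P where P: "is_split m 3 P" "v = (MIN i\<in>{..<3}. util u (P i))" by auto
    have "v \<in> (\<lambda>i. util u (P i)) ` {..<3}" unfolding P(2) by (rule Min_in) (simp_all add: lt3)
    then obtain i where i: "i < 3" "v = util u (P i)" by auto
    have "P i \<subseteq> {..<m}" using P(1) i(1) unfolding is_split_def is_bundle_def by auto
    thus "v \<in> util u ` Pow {..<m}" using i by auto
  qed
  have fin: "finite ?S" using sub by (rule finite_subset) auto
  have mem: "(arc m 0 m, {}, {}) \<in> set (SPL m)" using SPL_mem[OF m0, of m 0] by simp
  have "is_split m 3 (\<lambda>i. if i = 0 then arc m 0 m else if i = 1 then {} else {})"
    by (rule SPL_alloc1[OF m0 mem])
  hence ne: "?S \<noteq> {}" by blast
  have "Max ?S \<in> ?S" using fin ne by (rule Max_in)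
  thus ?thesis unfolding mms_def by auto
qed

lemma split_SPL: assumes m0: "0 < m" and sp: "is_split m 3 P"
  shows "\<exists>X Y Z. (X, Y, Z) \<in> set (SPLH m) \<and> X \<in> P ` {..<3} \<and> Y \<in> P ` {..<3} \<and> Z \<in> P ` {..<3}"
proof -
  have bun: "\<And>i. i < 3 \<Longrightarrow> is_bundle m (P i)" using sp unfolding is_split_def by blast
  have dis: "\<And>i j. i < 3 \<Longrightarrow> j < 3 \<Longrightarrow> i \<noteq> j \<Longrightarrow> P i \<inter> P j = {}" using sp unfolding is_split_def by blast
  have cov: "(\<Union>i<3. P i) = {..<m}" using sp unfolding is_split_def by blast
  have subm: "\<And>i. i < 3 \<Longrightarrow> P i \<subseteq> {..<m}" using bun unfolding is_bundle_def by blast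
  have "0 \<in> (\<Union>i<3. P i)" using cov m0 by simp
  then obtain i where i0: "i < 3" "0 \<in> P i" by auto
  have i: "i < 3" "P i \<noteq> {}" using i0 by auto
  obtain s l where sl: "s < m" "l \<le> m" "P i = arc m s l" using bundle_arc[OF m0 bun[OF i(1)]] by blast
  have l0: "0 < l" using sl(3) i(2) by (cases l) auto
  have s0: "s = 0 \<or> m < s + l" using zero_in_arc[OF sl(1)] i0(2) sl(3) by simp
  show ?thesis
  proof (cases "l = m")
    case True
    hence Pi: "P i = {..<m}" using sl(3) arc_full[OF m0] by simp
    have "(if i = 0 then 1 else 0) < (3::nat) \<and> (if i = 0 then 1 else 0) \<noteq> i" by simp
    then obtain k where k: "k < 3" "k \<noteq> i" by blast
    have Pk: "P k = {}" using dis[OF i(1) k(1) k(2)[symmetric]] subm[OF k(1)] Pi by blast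
    have mem: "(arc m 0 m, arc m ((0 + m) mod m) 0, arc m ((0 + m + 0) mod m) (m - m - 0)) \<in> set (SPLH m)"
      using SPLH_mem[OF m0, of m 0] m0 by simp
    have "arc m 0 m \<in> P ` {..<3}" using Pi arc_full[OF m0] i(1) by (metis image_eqI lessThan_iff)
    moreover have "{} \<in> P ` {..<3}" using Pk k(1) by (metis image_eqI lessThan_iff)
    ultimately show ?thesis using mem by (intro exI[of _ "arc m 0 m"] exI[of _ "{}"]) simp
  next
    case False
    hence lm: "l < m" using sl(2) by simp
    define e where "e = (s + l) mod m"
    have em: "e < m" using m0 by (simp add: e_def)
    have eP: "e \<notin> P i"
    proof
      assume "e \<in> P i"
      moreover have "e \<in> arc m (s + l) 1" unfolding e_def arc_def by simp
      ultimately show False using arc_disj[of l 1 m s] lm sl(3) by auto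
    qed
    obtain k where k: "k < 3" "e \<in> P k" using em cov by auto
    have ki: "k \<noteq> i" using k eP by auto
    obtain s' l' where sl': "s' < m" "l' \<le> m" "P k = arc m s' l'" using bundle_arc[OF m0 bun[OF k(1)]] by blast
    have pred: "(e + m - 1) mod m \<in> P i"
    proof -
      have "(e + m - 1) mod m = ((s + l) mod m + (m - 1)) mod m" unfolding e_def using m0 by simp
      also have "\<dots> = (s + l + (m - 1)) mod m" by (simp add: mod_add_left_eq)
      also have "s + l + (m - 1) = (s + (l - 1)) + m" using m0 l0 by simp
      also have "(s + (l - 1) + m) mod m = (s + (l - 1)) mod m" by simp
      finally have eq: "(e + m - 1) mod m = (s + (l - 1)) mod m" .
      show ?thesis unfolding sl(3) arc_def eq using l0 by (intro image_eqI[of _ _ "l - 1"]) auto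
    qed
    hence "(e + m - 1) mod m \<notin> P k" using dis[OF i(1) k(1) ki[symmetric]] by blast
    hence "e = s' mod m" using arc_start[OF m0, of e s' l'] k(2) sl'(3) by simp
    hence Pk: "P k = arc m (s + l) l'" using sl'(3) e_def by (metis arc_mod)
    have Uik: "P i \<union> P k = arc m s (l + l')" using sl(3) Pk by (simp add: arc_add)
    have "card (P i \<union> P k) = l + l'"
    proof -
      have "card (P i \<union> P k) = card (P i) + card (P k)"
        using dis[OF i(1) k(1) ki[symmetric]] sl(3) Pk by (intro card_Un_disjoint) auto
      thus ?thesis using sl(2,3) sl'(2) Pk arc_card by simp
    qed
    moreover have "card (P i \<union> P k) \<le> m" using subm[OF i(1)] subm[OF k(1)] card_mono[of "{..<m}" "P i \<union> P k"] by simp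
    ultimately have ll: "l + l' \<le> m" by simp
    define r where "r = 3 - i - k"
    have r1: "r < 3" "r \<noteq> i" "r \<noteq> k"
      using i(1) k(1) ki unfolding r_def by presburger+
    have r4: "j = r" if "j < 3" "j \<noteq> i" "j \<noteq> k" for j
      using that i(1) k(1) ki unfolding r_def by presburger
    note r = r1 r4
    have Pr: "P r = {..<m} - (P i \<union> P k)"
    proof
      show "P r \<subseteq> {..<m} - (P i \<union> P k)" using subm[OF r(1)] dis[OF r(1) i(1) r(2)] dis[OF r(1) k(1) r(3)] by blast
      show "{..<m} - (P i \<union> P k) \<subseteq> P r"
      proof
        fix x assume x: "x \<in> {..<m} - (P i \<union> P k)"
        then obtain j where j: "j < 3" "x \<in> P j" using cov by auto
        have "j \<noteq> i" "j \<noteq> k" using x j by auto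
        hence "j = r" using r(4) j(1) by simp
        thus "x \<in> P r" using j by simp
      qed
    qed
    hence Pr2: "P r = arc m (s + (l + l')) (m - (l + l'))" using Uik arc_compl[OF m0 ll, of s] by simp
    have mem: "(arc m s l, arc m ((s + l) mod m) l', arc m ((s + l + l') mod m) (m - l - l')) \<in> set (SPLH m)"
      using SPLH_mem[OF sl(1) ll l0 s0] .
    have "arc m s l \<in> P ` {..<3}" using sl(3) i(1) by (metis image_eqI lessThan_iff)
    moreover have "arc m ((s + l) mod m) l' \<in> P ` {..<3}" using Pk k(1) by (metis arc_mod image_eqI lessThan_iff)
    moreover have "arc m ((s + l + l') mod m) (m - l - l') \<in> P ` {..<3}"
      using Pr2 r(1) by (metis arc_mod add.assoc diff_diff_left image_eqI lessThan_iff)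
    ultimately show ?thesis using mem by blast
  qed
qed

lemma agent_facts: assumes m0: "0 < m" and nn: "\<forall>g<m. 0 \<le> u g"
  shows "list_ex (\<lambda>(X, Y, Z). mms m 3 u \<le> util u X \<and> mms m 3 u \<le> util u Y \<and> mms m 3 u \<le> util u Z) (SPLH m)
    \<and> list_all (\<lambda>(X, Y, Z). mms m 3 u \<le> util u X \<or> mms m 3 u \<le> util u Y \<or> mms m 3 u \<le> util u Z) (SPLH m)
    \<and> list_all (\<lambda>(X, Y). mms m 3 u \<le> util u X \<longrightarrow> mms m 3 u \<le> util u Y) (MONO m)"
proof -
  obtain P where P: "is_split m 3 P" "mms m 3 u = (MIN i\<in>{..<3}. util u (P i))"
    using mms_attained[OF m0] by blast
  let ?mu = "mms m 3 u"
  have le: "?mu \<le> util u (P i)" if "i < 3" for i unfolding P(2) using that by (intro Min_le) auto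
  have tot: "3 * ?mu \<le> util u {..<m}" using le[of 0] le[of 1] le[of 2] split_sum[OF P(1), of u] by simp
  have ex: "\<exists>X Y Z. (X, Y, Z) \<in> set (SPLH m) \<and> X \<in> P ` {..<3} \<and> Y \<in> P ` {..<3} \<and> Z \<in> P ` {..<3}"
    by (rule split_SPL[OF m0 P(1)])
  have A: "list_ex (\<lambda>(X, Y, Z). ?mu \<le> util u X \<and> ?mu \<le> util u Y \<and> ?mu \<le> util u Z) (SPLH m)"
    using ex le unfolding list_ex_iff by fastforce
  have B: "list_all (\<lambda>(X, Y, Z). ?mu \<le> util u X \<or> ?mu \<le> util u Y \<or> ?mu \<le> util u Z) (SPLH m)"
    unfolding list_all_iff
  proof
    fix t assume mem0: "t \<in> set (SPLH m)"
    obtain X Y Z where t: "t = (X, Y, Z)" by (cases t)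
    have mem: "(X, Y, Z) \<in> set (SPL m)" using mem0 t SPLH_sub by auto
    have "is_split m 3 (\<lambda>i. if i = 0 then X else if i = 1 then Y else Z)" by (rule SPL_alloc1[OF m0 mem])
    from split_sum[OF this, of u] have "util u X + util u Y + util u Z = util u {..<m}" by simp
    hence "?mu \<le> util u X \<or> ?mu \<le> util u Y \<or> ?mu \<le> util u Z" using tot by linarith
    thus "case t of (X, Y, Z) \<Rightarrow> ?mu \<le> util u X \<or> ?mu \<le> util u Y \<or> ?mu \<le> util u Z" using t by simp
  qed
  have C: "list_all (\<lambda>(X, Y). ?mu \<le> util u X \<longrightarrow> ?mu \<le> util u Y) (MONO m)"
    unfolding list_all_iff
  proof
    fix t assume mem0: "t \<in> set (MONO m)"
    obtain X Y where t: "t = (X, Y)" by (cases t)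
    have mem: "(X, Y) \<in> set (MONO m)" using mem0 t by simp
    have "Y \<subseteq> {..<m}" using mem arc_sub[OF m0] unfolding MONO_def by auto
    hence "util u X \<le> util u Y" using util_mono[OF nn MONO_sub[OF mem]] by simp
    hence "?mu \<le> util u X \<longrightarrow> ?mu \<le> util u Y" by simp
    thus "case t of (X, Y) \<Rightarrow> ?mu \<le> util u X \<longrightarrow> ?mu \<le> util u Y" using t by simp
  qed
  show ?thesis using A B C by blast
qed

definition T3 :: "(nat set \<Rightarrow> bool) \<Rightarrow> nat set \<Rightarrow> nat set \<Rightarrow> nat set \<Rightarrow> bool" where
  "T3 A X Y Z \<longleftrightarrow> A X \<and> A Y \<and> A Z"

lemma T3_all: "list_all (\<lambda>(X, Y, Z). T3 A X Y Z \<longrightarrow> A X \<and> A Y \<and> A Z) L"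
  unfolding list_all_iff T3_def by auto

definition HYP :: "nat \<Rightarrow> (nat set \<Rightarrow> bool) \<Rightarrow> bool" where
  "HYP m A \<longleftrightarrow> list_ex (\<lambda>(X, Y, Z). T3 A X Y Z) (SPLH m)
    \<and> list_all (\<lambda>(X, Y, Z). A X \<or> A Y \<or> A Z) (SPLH m)
    \<and> list_all (\<lambda>(X, Y). A X \<longrightarrow> A Y) (MONO m)"

definition COMB :: "nat \<Rightarrow> bool" where
  "COMB m \<longleftrightarrow> (\<forall>A0 A1 A2. HYP m A0 \<longrightarrow> HYP m A1 \<longrightarrow> HYP m A2 \<longrightarrow>
     list_ex (\<lambda>(X, Y, Z). (A0 X \<and> A1 Y \<and> A2 Z) \<or> (A0 X \<and> A1 Z \<and> A2 Y)) (SPL m))"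

lemma final_step:
  assumes comb: "COMB m" and m0: "0 < m" and nn: "\<And>i g. i < 3 \<Longrightarrow> g < m \<Longrightarrow> us i g \<ge> 0"
  shows "\<exists>P. is_mms_allocation m 3 us P"
proof -
  define A where "A j X \<longleftrightarrow> mms m 3 (us j) \<le> util (us j) X" for j X
  have H: "HYP m (A j)" if "j < 3" for j
    using agent_facts[OF m0, of "us j"] nn[OF that] unfolding HYP_def A_def T3_def by blast
  have "list_ex (\<lambda>(X, Y, Z). (A 0 X \<and> A 1 Y \<and> A 2 Z) \<or> (A 0 X \<and> A 1 Z \<and> A 2 Y)) (SPL m)"
    using comb H[of 0] H[of 1] H[of 2] unfolding COMB_def by simp
  then obtain t where t: "t \<in> set (SPL m)" "(\<lambda>(X, Y, Z). (A 0 X \<and> A 1 Y \<and> A 2 Z) \<or> (A 0 X \<and> A 1 Z \<and> A 2 Y)) t"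
    unfolding list_ex_iff by blast
  obtain X Y Z where tX: "t = (X, Y, Z)" by (cases t)
  have mem: "(X, Y, Z) \<in> set (SPL m)" using t(1) tX by simp
  have c: "(A 0 X \<and> A 1 Y \<and> A 2 Z) \<or> (A 0 X \<and> A 1 Z \<and> A 2 Y)" using t(2) tX by simp
  thus ?thesis
  proof
    assume a: "A 0 X \<and> A 1 Y \<and> A 2 Z"
    let ?P = "\<lambda>i. if i = 0 then X else if i = 1 then Y else Z"
    have "is_mms_allocation m 3 us ?P"
      unfolding is_mms_allocation_def all3 using SPL_alloc1[OF m0 mem] a unfolding A_def by simp
    thus ?thesis by blast
  next
    assume a: "A 0 X \<and> A 1 Z \<and> A 2 Y"
    let ?P = "\<lambda>i. if i = 0 then X else if i = 1 then Z else Y"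
    have "is_mms_allocation m 3 us ?P"
      unfolding is_mms_allocation_def all3 using SPL_alloc2[OF m0 mem] a unfolding A_def by simp
    thus ?thesis by blast
  qed
qed

lemma zero_case: "\<exists>P. is_mms_allocation 0 3 us P"
proof -
  let ?P = "\<lambda>i::nat. {} :: nat set"
  have b: "is_bundle 0 {}" unfolding is_bundle_def by simp
  have sp: "is_split 0 3 ?P" unfolding is_split3 using b by simp
  have S: "{(MIN i\<in>{..<3}. util u (P i)) | P. is_split 0 3 P} = {0}" for u
  proof -
    have "(MIN i\<in>{..<3}. util u (P i)) = 0" if "is_split 0 3 P" for P
    proof -
      have "P i = {}" if "i < 3" for i using \<open>is_split 0 3 P\<close> that unfolding is_split_def is_bundle_def by auto
      hence "util u (P i) = 0" if "i < 3" for i using that by (simp add: util_def)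
      thus ?thesis unfolding lt3 by simp
    qed
    thus ?thesis using sp by (auto intro!: exI[where x="\<lambda>i. {}"])
  qed
  have "is_mms_allocation 0 3 us ?P"
    unfolding is_mms_allocation_def mms_def S using sp by (simp add: util_def)
  thus ?thesis by blast
qed



lemma T6_1: "T6 1 = [(0, 0, 0, 0, 0, 1), (0, 0, 0, 1, 0, 0), (0, 1, 0, 0, 0, 0)]"
  by code_simp

lemma MP_1: "MP 1 = [(0, 0, 0, 1)]"
  by code_simp

lemma SPL_1: "SPL 1 = [({}, {}, {..<1}), ({}, {..<1}, {}), ({..<1}, {}, {})]"
  unfolding SPL_alt T6_1 by (simp add: arc_full)

lemma SPLH_1: "SPLH 1 = [({..<1}, {}, {})]"
  unfolding SPLH_def T6_1 by (simp add: arc_full)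

lemma MONO_1: "MONO 1 = [({}, {..<1}), ({}, {..<1})]"
  unfolding MONO_alt MP_1 by (simp add: arc_full)

lemma COMB_1: "COMB 1"
  unfolding COMB_def
  apply (intro allI impI)
  subgoal for A0 A1 A2
    using T3_all[of A0 "SPLH 1"] T3_all[of A1 "SPLH 1"] T3_all[of A2 "SPLH 1"]
    unfolding HYP_def SPL_1 SPLH_1 MONO_1 list_ex_Nil_iff list_ex_Cons_iff list_all_Nil_iff list_all_Cons_iff prod.case
    by satx
  done

lemma T6_2: "T6 2 = [(0, 0, 0, 0, 0, 2), (0, 0, 0, 1, 1, 1), (0, 0, 0, 2, 0, 0), (0, 1, 1, 0, 1, 1), (0, 1, 1, 1, 0, 0), (0, 2, 0, 0, 0, 0), (1, 0, 1, 0, 1, 2), (1, 0, 1, 1, 0, 1), (1, 0, 1, 2, 1, 0), (1, 1, 0, 0, 0, 1), (1, 1, 0, 1, 1, 0), (1, 2, 1, 0, 1, 0)]"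
  by code_simp

lemma MP_2: "MP 2 = [(0, 0, 1, 1), (0, 1, 1, 2), (1, 0, 0, 1), (1, 1, 0, 2)]"
  by code_simp

lemma SPL_2: "SPL 2 = [({}, {}, {..<2}), ({}, arc 2 0 1, arc 2 1 1), ({}, {..<2}, {}), (arc 2 0 1, {}, arc 2 1 1), (arc 2 0 1, arc 2 1 1, {}), ({..<2}, {}, {}), ({}, {}, {..<2}), ({}, arc 2 1 1, arc 2 0 1), ({}, {..<2}, {}), (arc 2 1 1, {}, arc 2 0 1), (arc 2 1 1, arc 2 0 1, {}), ({..<2}, {}, {})]"
  unfolding SPL_alt T6_2 by (simp add: arc_full)

lemma SPLH_2: "SPLH 2 = [(arc 2 0 1, {}, arc 2 1 1), (arc 2 0 1, arc 2 1 1, {}), ({..<2}, {}, {}), ({..<2}, {}, {})]"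
  unfolding SPLH_def T6_2 by (simp add: arc_full)

lemma MONO_2: "MONO 2 = [({}, arc 2 0 1), (arc 2 0 1, {..<2}), ({}, arc 2 1 1), (arc 2 1 1, {..<2}), ({}, arc 2 0 1), (arc 2 1 1, {..<2}), ({}, arc 2 1 1), (arc 2 0 1, {..<2})]"
  unfolding MONO_alt MP_2 by (simp add: arc_full)

lemma COMB_2: "COMB 2"
  unfolding COMB_def
  apply (intro allI impI)
  subgoal for A0 A1 A2
    using T3_all[of A0 "SPLH 2"] T3_all[of A1 "SPLH 2"] T3_all[of A2 "SPLH 2"]
    unfolding HYP_def SPL_2 SPLH_2 MONO_2 list_ex_Nil_iff list_ex_Cons_iff list_all_Nil_iff list_all_Cons_iff prod.case
    by satx
  done

lemma T6_3: "T6 3 = [(0, 0, 0, 0, 0, 3), (0, 0, 0, 1, 1, 2), (0, 0, 0, 2, 2, 1), (0, 0, 0, 3, 0, 0), (0, 1, 1, 0, 1, 2), (0, 1, 1, 1, 2, 1), (0, 1, 1, 2, 0, 0), (0, 2, 2, 0, 2, 1), (0, 2, 2, 1, 0, 0), (0, 3, 0, 0, 0, 0), (1, 0, 1, 0, 1, 3), (1, 0, 1, 1, 2, 2), (1, 0, 1, 2, 0, 1), (1, 0, 1, 3, 1, 0), (1, 1, 2, 0, 2, 2), (1, 1, 2, 1, 0, 1), (1, 1, 2, 2, 1, 0), (1, 2, 0, 0, 0, 1), (1, 2, 0, 1, 1, 0), (1, 3, 1, 0, 1, 0), (2, 0, 2, 0, 2, 3), (2, 0, 2, 1, 0, 2),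 (2, 0, 2, 2, 1, 1), (2, 0, 2, 3, 2, 0), (2, 1, 0, 0, 0, 2), (2, 1, 0, 1, 1, 1), (2, 1, 0, 2, 2, 0), (2, 2, 1, 0, 1, 1), (2, 2, 1, 1, 2, 0), (2, 3, 2, 0, 2, 0)]"
  by code_simp

lemma MP_3: "MP 3 = [(0, 0, 1, 1), (0, 1, 1, 2), (0, 2, 1, 3), (1, 0, 2, 1), (1, 1, 2, 2), (1, 2, 2, 3), (2, 0, 0, 1), (2, 1, 0, 2), (2, 2, 0, 3)]"
  by code_simp

lemma SPL_3: "SPL 3 = [({}, {}, {..<3}), ({}, arc 3 0 1, arc 3 1 2), ({}, arc 3 0 2, arc 3 2 1), ({}, {..<3}, {}), (arc 3 0 1, {}, arc 3 1 2), (arc 3 0 1, arc 3 1 1, arc 3 2 1), (arc 3 0 1, arc 3 1 2, {}), (arc 3 0 2, {}, arc 3 2 1), (arc 3 0 2, arc 3 2 1, {}), ({..<3}, {}, {}), ({}, {}, {..<3}), ({}, arc 3 1 1, arc 3 2 2), ({}, arc 3 1 2, arc 3 0 1), ({}, {..<3}, {}), (arc 3 1 1, {}, arc 3 2 2), (arc 3 1 1, arc 3 2 1, arc 3 0 1), (arc 3 1 1, arc 3 2 2, {}), (arc 3 1 2, {}, arc 3 0 1), (arc 3 1 2, arc 3 0 1, {}), ({..<3}, {}, {}), ({}, {}, {..<3}), ({}, arc 3 2 1, arc 3 0 2), ({}, arc 3 2 2, arc 3 1 1), ({}, {..<3}, {}), (arc 3 2 1, {}, arc 3 0 2), (arc 3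 2 1, arc 3 0 1, arc 3 1 1), (arc 3 2 1, arc 3 0 2, {}), (arc 3 2 2, {}, arc 3 1 1), (arc 3 2 2, arc 3 1 1, {}), ({..<3}, {}, {})]"
  unfolding SPL_alt T6_3 by (simp add: arc_full)

lemma SPLH_3: "SPLH 3 = [(arc 3 0 1, {}, arc 3 1 2), (arc 3 0 1, arc 3 1 1, arc 3 2 1), (arc 3 0 1, arc 3 1 2, {}), (arc 3 0 2, {}, arc 3 2 1), (arc 3 0 2, arc 3 2 1, {}), ({..<3}, {}, {}), ({..<3}, {}, {}), (arc 3 2 2, {}, arc 3 1 1), (arc 3 2 2, arc 3 1 1, {}), ({..<3}, {}, {})]"
  unfolding SPLH_def T6_3 by (simp add: arc_full)

lemma MONO_3: "MONO 3 = [({}, arc 3 0 1), (arc 3 0 1, arc 3 0 2), (arc 3 0 2, {..<3}), ({}, arc 3 1 1), (arc 3 1 1, arc 3 1 2), (arc 3 1 2, {..<3}), ({}, arc 3 2 1), (arc 3 2 1, arc 3 2 2), (arc 3 2 2, {..<3}), ({}, arc 3 0 1), (arc 3 1 1, arc 3 0 2), (arc 3 1 2, {..<3}), ({}, arc 3 1 1), (arc 3 2 1, arc 3 1 2), (arc 3 2 2, {..<3}), ({}, arc 3 2 1), (arc 3 0 1, arc 3 2 2), (arc 3 0 2, {..<3})]"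
  unfolding MONO_alt MP_3 by (simp add: arc_full)

lemma COMB_3: "COMB 3"
  unfolding COMB_def
  apply (intro allI impI)
  subgoal for A0 A1 A2
    using T3_all[of A0 "SPLH 3"] T3_all[of A1 "SPLH 3"] T3_all[of A2 "SPLH 3"]
    unfolding HYP_def SPL_3 SPLH_3 MONO_3 list_ex_Nil_iff list_ex_Cons_iff list_all_Nil_iff list_all_Cons_iff prod.case
    by satx
  done

lemma T6_4: "T6 4 = [(0, 0, 0, 0, 0, 4), (0, 0, 0, 1, 1, 3), (0, 0, 0, 2, 2, 2), (0, 0, 0, 3, 3, 1), (0, 0, 0, 4, 0, 0), (0, 1, 1, 0, 1, 3), (0, 1, 1, 1, 2, 2), (0, 1, 1, 2, 3, 1), (0, 1, 1, 3, 0, 0), (0, 2, 2, 0, 2, 2), (0, 2, 2, 1, 3, 1), (0, 2, 2, 2, 0, 0), (0, 3, 3, 0, 3, 1), (0, 3, 3, 1, 0, 0), (0, 4, 0, 0, 0, 0), (1, 0, 1, 0, 1, 4), (1, 0, 1, 1, 2, 3), (1, 0, 1, 2, 3, 2), (1, 0, 1, 3, 0, 1), (1, 0, 1, 4, 1, 0), (1, 1, 2, 0, 2, 3), (1, 1, 2, 1, 3, 2), (1, 1, 2, 2, 0, 1), (1, 1, 2, 3, 1, 0), (1, 2, 3, 0, 3, 2), (1, 2, 3, 1, 0, 1), (1, 2, 3, 2, 1, 0), (1, 3, 0, 0, 0, 1), (1, 3, 0, 1, 1, 0), (1, 4, 1, 0, 1, 0), (2, 0, 2, 0, 2, 4), (2,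 0, 2, 1, 3, 3), (2, 0, 2, 2, 0, 2), (2, 0, 2, 3, 1, 1), (2, 0, 2, 4, 2, 0), (2, 1, 3, 0, 3, 3), (2, 1, 3, 1, 0, 2), (2, 1, 3, 2, 1, 1), (2, 1, 3, 3, 2, 0), (2, 2, 0, 0, 0, 2), (2, 2, 0, 1, 1, 1), (2, 2, 0, 2, 2, 0), (2, 3, 1, 0, 1, 1), (2, 3, 1, 1, 2, 0), (2, 4, 2, 0, 2, 0), (3, 0, 3, 0, 3, 4), (3, 0, 3, 1, 0, 3), (3, 0, 3, 2, 1, 2), (3, 0, 3, 3, 2, 1), (3, 0, 3, 4, 3, 0), (3, 1, 0, 0, 0, 3), (3, 1, 0, 1, 1, 2), (3, 1, 0, 2, 2, 1), (3, 1, 0, 3, 3, 0), (3, 2, 1, 0, 1, 2), (3, 2, 1, 1, 2, 1), (3, 2, 1, 2, 3, 0), (3, 3, 2, 0, 2, 1), (3, 3, 2, 1, 3, 0), (3, 4, 3, 0, 3, 0)]"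
  by code_simp

lemma MP_4: "MP 4 = [(0, 0, 1, 1), (0, 1, 1, 2), (0, 2, 1, 3), (0, 3, 1, 4), (1, 0, 2, 1), (1, 1, 2, 2), (1, 2, 2, 3), (1, 3, 2, 4), (2, 0, 3, 1), (2, 1, 3, 2), (2, 2, 3, 3), (2, 3, 3, 4), (3, 0, 0, 1), (3, 1, 0, 2), (3, 2, 0, 3), (3, 3, 0, 4)]"
  by code_simp

lemma SPL_4: "SPL 4 = [({}, {}, {..<4}), ({}, arc 4 0 1, arc 4 1 3), ({}, arc 4 0 2, arc 4 2 2), ({}, arc 4 0 3, arc 4 3 1), ({}, {..<4}, {}), (arc 4 0 1, {}, arc 4 1 3), (arc 4 0 1, arc 4 1 1, arc 4 2 2), (arc 4 0 1, arc 4 1 2, arc 4 3 1), (arc 4 0 1, arc 4 1 3, {}), (arc 4 0 2, {}, arc 4 2 2), (arc 4 0 2, arc 4 2 1, arc 4 3 1), (arc 4 0 2, arc 4 2 2, {}), (arc 4 0 3, {}, arc 4 3 1), (arc 4 0 3, arc 4 3 1, {}), ({..<4}, {}, {}), ({}, {}, {..<4}), ({}, arc 4 1 1, arc 4 2 3), ({}, arc 4 1 2, arc 4 3 2), ({}, arc 4 1 3, arc 4 0 1), ({}, {..<4}, {}), (arc 4 1 1, {}, arc 4 2 3), (arc 4 1 1, arc 4 2 1, arc 4 3 2), (arc 4 1 1, arc 4 2 2, arc 4 0 1), (arc 4 1 1, arc 4 2 3, {}), (arc 4 1 2, {}, arc 4 3 2), (arc 4 1 2, arc 4 3 1, arc 4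 0 1), (arc 4 1 2, arc 4 3 2, {}), (arc 4 1 3, {}, arc 4 0 1), (arc 4 1 3, arc 4 0 1, {}), ({..<4}, {}, {}), ({}, {}, {..<4}), ({}, arc 4 2 1, arc 4 3 3), ({}, arc 4 2 2, arc 4 0 2), ({}, arc 4 2 3, arc 4 1 1), ({}, {..<4}, {}), (arc 4 2 1, {}, arc 4 3 3), (arc 4 2 1, arc 4 3 1, arc 4 0 2), (arc 4 2 1, arc 4 3 2, arc 4 1 1), (arc 4 2 1, arc 4 3 3, {}), (arc 4 2 2, {}, arc 4 0 2), (arc 4 2 2, arc 4 0 1, arc 4 1 1), (arc 4 2 2, arc 4 0 2, {}), (arc 4 2 3, {}, arc 4 1 1), (arc 4 2 3, arc 4 1 1, {}), ({..<4}, {}, {}), ({}, {}, {..<4}), ({}, arc 4 3 1, arc 4 0 3), ({}, arc 4 3 2, arc 4 1 2), ({}, arc 4 3 3, arc 4 2 1), ({}, {..<4}, {}), (arc 4 3 1, {}, arc 4 0 3), (arc 4 3 1, arc 4 0 1, arc 4 1 2), (arc 4 3 1, arc 4 0 2, arc 4 2 1), (arc 4 3 1, arc 4 0 3, {}), (arc 4 3 2, {}, arc 4 1 2), (arc 4 3 2, arc 4 1 1, arc 4 2 1), (arc 4 3 2, arc 4 1 2, {}), (arc 4 3 3, {}, arc 4 2 1), (arc 4 3 3, arc 4 2 1, {}), ({..<4}, {}, {})]"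
  unfolding SPL_alt T6_4 by (simp add: arc_full)

lemma SPLH_4: "SPLH 4 = [(arc 4 0 1, {}, arc 4 1 3), (arc 4 0 1, arc 4 1 1, arc 4 2 2), (arc 4 0 1, arc 4 1 2, arc 4 3 1), (arc 4 0 1, arc 4 1 3, {}), (arc 4 0 2, {}, arc 4 2 2), (arc 4 0 2, arc 4 2 1, arc 4 3 1), (arc 4 0 2, arc 4 2 2, {}), (arc 4 0 3, {}, arc 4 3 1), (arc 4 0 3, arc 4 3 1, {}), ({..<4}, {}, {}), ({..<4}, {}, {}), (arc 4 2 3, {}, arc 4 1 1), (arc 4 2 3, arc 4 1 1, {}), ({..<4}, {}, {}), (arc 4 3 2, {}, arc 4 1 2), (arc 4 3 2, arc 4 1 1, arc 4 2 1), (arc 4 3 2, arc 4 1 2, {}), (arc 4 3 3, {}, arc 4 2 1), (arc 4 3 3, arc 4 2 1, {}), ({..<4}, {}, {})]"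
  unfolding SPLH_def T6_4 by (simp add: arc_full)

lemma MONO_4: "MONO 4 = [({}, arc 4 0 1), (arc 4 0 1, arc 4 0 2), (arc 4 0 2, arc 4 0 3), (arc 4 0 3, {..<4}), ({}, arc 4 1 1), (arc 4 1 1, arc 4 1 2), (arc 4 1 2, arc 4 1 3), (arc 4 1 3, {..<4}), ({}, arc 4 2 1), (arc 4 2 1, arc 4 2 2), (arc 4 2 2, arc 4 2 3), (arc 4 2 3, {..<4}), ({}, arc 4 3 1), (arc 4 3 1, arc 4 3 2), (arc 4 3 2, arc 4 3 3), (arc 4 3 3, {..<4}), ({}, arc 4 0 1), (arc 4 1 1, arc 4 0 2), (arc 4 1 2, arc 4 0 3), (arc 4 1 3, {..<4}), ({}, arc 4 1 1), (arc 4 2 1, arc 4 1 2), (arc 4 2 2, arc 4 1 3), (arc 4 2 3, {..<4}), ({}, arc 4 2 1), (arc 4 3 1, arc 4 2 2), (arc 4 3 2, arc 4 2 3), (arc 4 3 3, {..<4}), ({}, arc 4 3 1), (arc 4 0 1, arc 4 3 2), (arc 4 0 2, arc 4 3 3), (arc 4 0 3, {..<4})]"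
  unfolding MONO_alt MP_4 by (simp add: arc_full)

lemma COMB_4: "COMB 4"
  unfolding COMB_def
  apply (intro allI impI)
  subgoal for A0 A1 A2
    using T3_all[of A0 "SPLH 4"] T3_all[of A1 "SPLH 4"] T3_all[of A2 "SPLH 4"]
    unfolding HYP_def SPL_4 SPLH_4 MONO_4 list_ex_Nil_iff list_ex_Cons_iff list_all_Nil_iff list_all_Cons_iff prod.case
    by satx
  done

lemma T6_5: "T6 5 = [(0, 0, 0, 0, 0, 5), (0, 0, 0, 1, 1, 4), (0, 0, 0, 2, 2, 3), (0, 0, 0, 3, 3, 2), (0, 0, 0, 4, 4, 1), (0, 0, 0, 5, 0, 0), (0, 1, 1, 0, 1, 4), (0, 1, 1, 1, 2, 3), (0, 1, 1, 2, 3, 2), (0, 1, 1, 3, 4, 1), (0, 1, 1, 4, 0, 0), (0, 2, 2, 0, 2, 3), (0, 2, 2, 1, 3, 2), (0, 2, 2, 2, 4, 1), (0, 2, 2, 3, 0, 0), (0, 3, 3, 0, 3, 2), (0, 3, 3, 1, 4, 1), (0, 3, 3, 2, 0, 0), (0, 4, 4, 0, 4, 1), (0, 4, 4, 1, 0, 0), (0, 5, 0, 0, 0, 0), (1, 0, 1, 0, 1, 5), (1, 0, 1, 1, 2, 4), (1, 0, 1, 2, 3, 3), (1, 0, 1, 3, 4, 2), (1, 0, 1, 4, 0, 1), (1, 0, 1, 5, 1, 0), (1, 1, 2, 0, 2, 4), (1, 1, 2, 1, 3, 3), (1, 1, 2, 2, 4, 2), (1, 1, 2, 3, 0, 1), (1,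 1, 2, 4, 1, 0), (1, 2, 3, 0, 3, 3), (1, 2, 3, 1, 4, 2), (1, 2, 3, 2, 0, 1), (1, 2, 3, 3, 1, 0), (1, 3, 4, 0, 4, 2), (1, 3, 4, 1, 0, 1), (1, 3, 4, 2, 1, 0), (1, 4, 0, 0, 0, 1), (1, 4, 0, 1, 1, 0), (1, 5, 1, 0, 1, 0), (2, 0, 2, 0, 2, 5), (2, 0, 2, 1, 3, 4), (2, 0, 2, 2, 4, 3), (2, 0, 2, 3, 0, 2), (2, 0, 2, 4, 1, 1), (2, 0, 2, 5, 2, 0), (2, 1, 3, 0, 3, 4), (2, 1, 3, 1, 4, 3), (2, 1, 3, 2, 0, 2), (2, 1, 3, 3, 1, 1), (2, 1, 3, 4, 2, 0), (2, 2, 4, 0, 4, 3), (2, 2, 4, 1, 0, 2), (2, 2, 4, 2, 1, 1), (2, 2, 4, 3, 2, 0), (2, 3, 0, 0, 0, 2), (2, 3, 0, 1, 1, 1), (2, 3, 0, 2, 2, 0), (2, 4, 1, 0, 1, 1), (2, 4, 1, 1, 2, 0), (2, 5, 2, 0, 2, 0), (3, 0, 3, 0, 3, 5), (3, 0, 3, 1, 4, 4), (3, 0, 3, 2, 0, 3), (3, 0, 3, 3, 1, 2), (3, 0, 3, 4, 2, 1), (3, 0, 3, 5, 3, 0), (3, 1, 4, 0, 4, 4), (3, 1, 4, 1, 0, 3), (3, 1, 4, 2, 1, 2), (3, 1, 4, 3, 2, 1), (3, 1, 4, 4, 3, 0), (3, 2, 0, 0, 0, 3), (3, 2, 0, 1,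 1, 2), (3, 2, 0, 2, 2, 1), (3, 2, 0, 3, 3, 0), (3, 3, 1, 0, 1, 2), (3, 3, 1, 1, 2, 1), (3, 3, 1, 2, 3, 0), (3, 4, 2, 0, 2, 1), (3, 4, 2, 1, 3, 0), (3, 5, 3, 0, 3, 0), (4, 0, 4, 0, 4, 5), (4, 0, 4, 1, 0, 4), (4, 0, 4, 2, 1, 3), (4, 0, 4, 3, 2, 2), (4, 0, 4, 4, 3, 1), (4, 0, 4, 5, 4, 0), (4, 1, 0, 0, 0, 4), (4, 1, 0, 1, 1, 3), (4, 1, 0, 2, 2, 2), (4, 1, 0, 3, 3, 1), (4, 1, 0, 4, 4, 0), (4, 2, 1, 0, 1, 3), (4, 2, 1, 1, 2, 2), (4, 2, 1, 2, 3, 1), (4, 2, 1, 3, 4, 0), (4, 3, 2, 0, 2, 2), (4, 3, 2, 1, 3, 1), (4, 3, 2, 2, 4, 0), (4, 4, 3, 0, 3, 1), (4, 4, 3, 1, 4, 0), (4, 5, 4, 0, 4, 0)]"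
  by code_simp

lemma MP_5: "MP 5 = [(0, 0, 1, 1), (0, 1, 1, 2), (0, 2, 1, 3), (0, 3, 1, 4), (0, 4, 1, 5), (1, 0, 2, 1), (1, 1, 2, 2), (1, 2, 2, 3), (1, 3, 2, 4), (1, 4, 2, 5), (2, 0, 3, 1), (2, 1, 3, 2), (2, 2, 3, 3), (2, 3, 3, 4), (2, 4, 3, 5), (3, 0, 4, 1), (3, 1, 4, 2), (3, 2, 4, 3), (3, 3, 4, 4), (3, 4, 4, 5), (4, 0, 0, 1), (4, 1, 0, 2), (4, 2, 0, 3), (4, 3, 0, 4), (4, 4, 0, 5)]"
  by code_simp

lemma SPL_5: "SPL 5 = [({}, {}, {..<5}), ({}, arc 5 0 1, arc 5 1 4), ({}, arc 5 0 2, arc 5 2 3), ({}, arc 5 0 3, arc 5 3 2), ({}, arc 5 0 4, arc 5 4 1), ({}, {..<5}, {}), (arc 5 0 1, {}, arc 5 1 4), (arc 5 0 1, arc 5 1 1, arc 5 2 3), (arc 5 0 1, arc 5 1 2, arc 5 3 2), (arc 5 0 1, arc 5 1 3, arc 5 4 1), (arc 5 0 1, arc 5 1 4, {}), (arc 5 0 2, {}, arc 5 2 3), (arc 5 0 2, arc 5 2 1, arc 5 3 2), (arc 5 0 2, arc 5 2 2, arc 5 4 1), (arc 5 0 2, arc 5 2 3, {}), (arc 5 0 3, {}, arc 5 3 2), (arc 5 0 3, arc 5 3 1, arc 5 4 1), (arc 5 0 3, arc 5 3 2, {}), (arc 5 0 4, {}, arc 5 4 1), (arc 5 0 4, arc 5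 4 1, {}), ({..<5}, {}, {}), ({}, {}, {..<5}), ({}, arc 5 1 1, arc 5 2 4), ({}, arc 5 1 2, arc 5 3 3), ({}, arc 5 1 3, arc 5 4 2), ({}, arc 5 1 4, arc 5 0 1), ({}, {..<5}, {}), (arc 5 1 1, {}, arc 5 2 4), (arc 5 1 1, arc 5 2 1, arc 5 3 3), (arc 5 1 1, arc 5 2 2, arc 5 4 2), (arc 5 1 1, arc 5 2 3, arc 5 0 1), (arc 5 1 1, arc 5 2 4, {}), (arc 5 1 2, {}, arc 5 3 3), (arc 5 1 2, arc 5 3 1, arc 5 4 2), (arc 5 1 2, arc 5 3 2, arc 5 0 1), (arc 5 1 2, arc 5 3 3, {}), (arc 5 1 3, {}, arc 5 4 2), (arc 5 1 3, arc 5 4 1, arc 5 0 1), (arc 5 1 3, arc 5 4 2, {}), (arc 5 1 4, {}, arc 5 0 1), (arc 5 1 4, arc 5 0 1, {}), ({..<5}, {}, {}), ({}, {}, {..<5}), ({}, arc 5 2 1, arc 5 3 4), ({}, arc 5 2 2, arc 5 4 3), ({}, arc 5 2 3, arc 5 0 2), ({}, arc 5 2 4, arc 5 1 1), ({}, {..<5}, {}), (arc 5 2 1, {}, arc 5 3 4), (arc 5 2 1, arc 5 3 1, arc 5 4 3), (arc 5 2 1, arc 5 3 2, arc 5 0 2), (arc 5 2 1, arc 5 3 3, arc 5 1 1), (arc 5 2 1, arc 5 3 4, {}), (arc 5 2 2, {}, arc 5 4 3), (arc 5 2 2, arc 5 4 1, arc 5 0 2), (arc 5 2 2, arc 5 4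 2, arc 5 1 1), (arc 5 2 2, arc 5 4 3, {}), (arc 5 2 3, {}, arc 5 0 2), (arc 5 2 3, arc 5 0 1, arc 5 1 1), (arc 5 2 3, arc 5 0 2, {}), (arc 5 2 4, {}, arc 5 1 1), (arc 5 2 4, arc 5 1 1, {}), ({..<5}, {}, {}), ({}, {}, {..<5}), ({}, arc 5 3 1, arc 5 4 4), ({}, arc 5 3 2, arc 5 0 3), ({}, arc 5 3 3, arc 5 1 2), ({}, arc 5 3 4, arc 5 2 1), ({}, {..<5}, {}), (arc 5 3 1, {}, arc 5 4 4), (arc 5 3 1, arc 5 4 1, arc 5 0 3), (arc 5 3 1, arc 5 4 2, arc 5 1 2), (arc 5 3 1, arc 5 4 3, arc 5 2 1), (arc 5 3 1, arc 5 4 4, {}), (arc 5 3 2, {}, arc 5 0 3), (arc 5 3 2, arc 5 0 1, arc 5 1 2), (arc 5 3 2, arc 5 0 2, arc 5 2 1), (arc 5 3 2, arc 5 0 3, {}), (arc 5 3 3, {}, arc 5 1 2), (arc 5 3 3, arc 5 1 1, arc 5 2 1), (arc 5 3 3, arc 5 1 2, {}), (arc 5 3 4, {}, arc 5 2 1), (arc 5 3 4, arc 5 2 1, {}), ({..<5}, {}, {}), ({}, {}, {..<5}), ({}, arc 5 4 1, arc 5 0 4), ({}, arc 5 4 2, arc 5 1 3), ({}, arc 5 4 3, arc 5 2 2), ({}, arc 5 4 4, arc 5 3 1), ({}, {..<5}, {}), (arc 5 4 1, {}, arc 5 0 4), (arc 5 4 1, arc 5 0 1, arc 5 1 3), (arc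 5 4 1, arc 5 0 2, arc 5 2 2), (arc 5 4 1, arc 5 0 3, arc 5 3 1), (arc 5 4 1, arc 5 0 4, {}), (arc 5 4 2, {}, arc 5 1 3), (arc 5 4 2, arc 5 1 1, arc 5 2 2), (arc 5 4 2, arc 5 1 2, arc 5 3 1), (arc 5 4 2, arc 5 1 3, {}), (arc 5 4 3, {}, arc 5 2 2), (arc 5 4 3, arc 5 2 1, arc 5 3 1), (arc 5 4 3, arc 5 2 2, {}), (arc 5 4 4, {}, arc 5 3 1), (arc 5 4 4, arc 5 3 1, {}), ({..<5}, {}, {})]"
  unfolding SPL_alt T6_5 by (simp add: arc_full)

lemma SPLH_5: "SPLH 5 = [(arc 5 0 1, {}, arc 5 1 4), (arc 5 0 1, arc 5 1 1, arc 5 2 3), (arc 5 0 1, arc 5 1 2, arc 5 3 2), (arc 5 0 1, arc 5 1 3, arc 5 4 1), (arc 5 0 1, arc 5 1 4, {}), (arc 5 0 2, {}, arc 5 2 3), (arc 5 0 2, arc 5 2 1, arc 5 3 2), (arc 5 0 2, arc 5 2 2, arc 5 4 1), (arc 5 0 2, arc 5 2 3, {}), (arc 5 0 3, {}, arc 5 3 2), (arc 5 0 3, arc 5 3 1, arc 5 4 1), (arc 5 0 3, arc 5 3 2, {}), (arc 5 0 4, {}, arc 5 4 1), (arc 5 0 4, arc 5 4 1, {}), ({..<5}, {}, {}), ({..<5}, {}, {}), (arc 5 2 4, {}, arc 5 1 1), (arc 5 2 4, arc 5 1 1, {}), ({..<5}, {}, {}), (arc 5 3 3, {}, arc 5 1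 2), (arc 5 3 3, arc 5 1 1, arc 5 2 1), (arc 5 3 3, arc 5 1 2, {}), (arc 5 3 4, {}, arc 5 2 1), (arc 5 3 4, arc 5 2 1, {}), ({..<5}, {}, {}), (arc 5 4 2, {}, arc 5 1 3), (arc 5 4 2, arc 5 1 1, arc 5 2 2), (arc 5 4 2, arc 5 1 2, arc 5 3 1), (arc 5 4 2, arc 5 1 3, {}), (arc 5 4 3, {}, arc 5 2 2), (arc 5 4 3, arc 5 2 1, arc 5 3 1), (arc 5 4 3, arc 5 2 2, {}), (arc 5 4 4, {}, arc 5 3 1), (arc 5 4 4, arc 5 3 1, {}), ({..<5}, {}, {})]"
  unfolding SPLH_def T6_5 by (simp add: arc_full)

lemma MONO_5: "MONO 5 = [({}, arc 5 0 1), (arc 5 0 1, arc 5 0 2), (arc 5 0 2, arc 5 0 3), (arc 5 0 3, arc 5 0 4), (arc 5 0 4, {..<5}), ({}, arc 5 1 1), (arc 5 1 1, arc 5 1 2), (arc 5 1 2, arc 5 1 3), (arc 5 1 3, arc 5 1 4), (arc 5 1 4, {..<5}), ({}, arc 5 2 1), (arc 5 2 1, arc 5 2 2), (arc 5 2 2, arc 5 2 3), (arc 5 2 3, arc 5 2 4), (arc 5 2 4, {..<5}), ({}, arc 5 3 1), (arc 5 3 1, arc 5 3 2), (arc 5 3 2, arc 5 3 3), (arc 5 3 3, arc 5 3 4), (arc 5 3 4, {..<5}), ({}, arc 5 4 1), (arc 5 4 1, arc 5 4 2), (arc 5 4 2, arc 5 4 3), (arc 5 4 3, arc 5 4 4),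 (arc 5 4 4, {..<5}), ({}, arc 5 0 1), (arc 5 1 1, arc 5 0 2), (arc 5 1 2, arc 5 0 3), (arc 5 1 3, arc 5 0 4), (arc 5 1 4, {..<5}), ({}, arc 5 1 1), (arc 5 2 1, arc 5 1 2), (arc 5 2 2, arc 5 1 3), (arc 5 2 3, arc 5 1 4), (arc 5 2 4, {..<5}), ({}, arc 5 2 1), (arc 5 3 1, arc 5 2 2), (arc 5 3 2, arc 5 2 3), (arc 5 3 3, arc 5 2 4), (arc 5 3 4, {..<5}), ({}, arc 5 3 1), (arc 5 4 1, arc 5 3 2), (arc 5 4 2, arc 5 3 3), (arc 5 4 3, arc 5 3 4), (arc 5 4 4, {..<5}), ({}, arc 5 4 1), (arc 5 0 1, arc 5 4 2), (arc 5 0 2, arc 5 4 3), (arc 5 0 3, arc 5 4 4), (arc 5 0 4, {..<5})]"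
  unfolding MONO_alt MP_5 by (simp add: arc_full)

lemma COMB_5: "COMB 5"
  unfolding COMB_def
  apply (intro allI impI)
  subgoal for A0 A1 A2
    using T3_all[of A0 "SPLH 5"] T3_all[of A1 "SPLH 5"] T3_all[of A2 "SPLH 5"]
    unfolding HYP_def SPL_5 SPLH_5 MONO_5 list_ex_Nil_iff list_ex_Cons_iff list_all_Nil_iff list_all_Cons_iff prod.case
    by satx
  done

lemma T6_6: "T6 6 = [(0, 0, 0, 0, 0, 6), (0, 0, 0, 1, 1, 5), (0, 0, 0, 2, 2, 4), (0, 0, 0, 3, 3, 3), (0, 0, 0, 4, 4, 2), (0, 0, 0, 5, 5, 1), (0, 0, 0, 6, 0, 0), (0, 1, 1, 0, 1, 5), (0, 1, 1, 1, 2, 4), (0, 1, 1, 2, 3, 3), (0, 1, 1, 3, 4, 2), (0, 1, 1, 4, 5, 1), (0, 1, 1, 5, 0, 0), (0, 2, 2, 0, 2, 4), (0, 2, 2, 1, 3, 3), (0, 2, 2, 2, 4, 2), (0, 2, 2, 3, 5, 1), (0, 2, 2, 4, 0, 0), (0, 3, 3, 0, 3, 3), (0, 3, 3, 1, 4, 2), (0, 3, 3, 2, 5, 1), (0, 3, 3, 3, 0, 0), (0, 4, 4, 0, 4, 2), (0, 4, 4, 1, 5, 1), (0, 4, 4, 2, 0, 0), (0, 5, 5, 0, 5, 1), (0, 5, 5, 1, 0, 0), (0, 6, 0, 0, 0, 0), (1, 0, 1, 0, 1, 6), (1, 0, 1, 1, 2, 5), (1, 0, 1, 2, 3, 4), (1,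 0, 1, 3, 4, 3), (1, 0, 1, 4, 5, 2), (1, 0, 1, 5, 0, 1), (1, 0, 1, 6, 1, 0), (1, 1, 2, 0, 2, 5), (1, 1, 2, 1, 3, 4), (1, 1, 2, 2, 4, 3), (1, 1, 2, 3, 5, 2), (1, 1, 2, 4, 0, 1), (1, 1, 2, 5, 1, 0), (1, 2, 3, 0, 3, 4), (1, 2, 3, 1, 4, 3), (1, 2, 3, 2, 5, 2), (1, 2, 3, 3, 0, 1), (1, 2, 3, 4, 1, 0), (1, 3, 4, 0, 4, 3), (1, 3, 4, 1, 5, 2), (1, 3, 4, 2, 0, 1), (1, 3, 4, 3, 1, 0), (1, 4, 5, 0, 5, 2), (1, 4, 5, 1, 0, 1), (1, 4, 5, 2, 1, 0), (1, 5, 0, 0, 0, 1), (1, 5, 0, 1, 1, 0), (1, 6, 1, 0, 1, 0), (2, 0, 2, 0, 2, 6), (2, 0, 2, 1, 3, 5), (2, 0, 2, 2, 4, 4), (2, 0, 2, 3, 5, 3), (2, 0, 2, 4, 0, 2), (2, 0, 2, 5, 1, 1), (2, 0, 2, 6, 2, 0), (2, 1, 3, 0, 3, 5), (2, 1, 3, 1, 4, 4), (2, 1, 3, 2, 5, 3), (2, 1, 3, 3, 0, 2), (2, 1, 3, 4, 1, 1), (2, 1, 3, 5, 2, 0), (2, 2, 4, 0, 4, 4), (2, 2, 4, 1, 5, 3), (2, 2, 4, 2, 0, 2), (2, 2, 4, 3, 1, 1), (2, 2, 4, 4, 2, 0), (2, 3, 5, 0, 5, 3), (2, 3, 5, 1,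 0, 2), (2, 3, 5, 2, 1, 1), (2, 3, 5, 3, 2, 0), (2, 4, 0, 0, 0, 2), (2, 4, 0, 1, 1, 1), (2, 4, 0, 2, 2, 0), (2, 5, 1, 0, 1, 1), (2, 5, 1, 1, 2, 0), (2, 6, 2, 0, 2, 0), (3, 0, 3, 0, 3, 6), (3, 0, 3, 1, 4, 5), (3, 0, 3, 2, 5, 4), (3, 0, 3, 3, 0, 3), (3, 0, 3, 4, 1, 2), (3, 0, 3, 5, 2, 1), (3, 0, 3, 6, 3, 0), (3, 1, 4, 0, 4, 5), (3, 1, 4, 1, 5, 4), (3, 1, 4, 2, 0, 3), (3, 1, 4, 3, 1, 2), (3, 1, 4, 4, 2, 1), (3, 1, 4, 5, 3, 0), (3, 2, 5, 0, 5, 4), (3, 2, 5, 1, 0, 3), (3, 2, 5, 2, 1, 2), (3, 2, 5, 3, 2, 1), (3, 2, 5, 4, 3, 0), (3, 3, 0, 0, 0, 3), (3, 3, 0, 1, 1, 2), (3, 3, 0, 2, 2, 1), (3, 3, 0, 3, 3, 0), (3, 4, 1, 0, 1, 2), (3, 4, 1, 1, 2, 1), (3, 4, 1, 2, 3, 0), (3, 5, 2, 0, 2, 1), (3, 5, 2, 1, 3, 0), (3, 6, 3, 0, 3, 0), (4, 0, 4, 0, 4, 6), (4, 0, 4, 1, 5, 5), (4, 0, 4, 2, 0, 4), (4, 0, 4, 3, 1, 3), (4, 0, 4, 4, 2, 2), (4, 0, 4, 5, 3, 1), (4, 0, 4, 6, 4, 0), (4, 1, 5, 0, 5, 5), (4,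 1, 5, 1, 0, 4), (4, 1, 5, 2, 1, 3), (4, 1, 5, 3, 2, 2), (4, 1, 5, 4, 3, 1), (4, 1, 5, 5, 4, 0), (4, 2, 0, 0, 0, 4), (4, 2, 0, 1, 1, 3), (4, 2, 0, 2, 2, 2), (4, 2, 0, 3, 3, 1), (4, 2, 0, 4, 4, 0), (4, 3, 1, 0, 1, 3), (4, 3, 1, 1, 2, 2), (4, 3, 1, 2, 3, 1), (4, 3, 1, 3, 4, 0), (4, 4, 2, 0, 2, 2), (4, 4, 2, 1, 3, 1), (4, 4, 2, 2, 4, 0), (4, 5, 3, 0, 3, 1), (4, 5, 3, 1, 4, 0), (4, 6, 4, 0, 4, 0), (5, 0, 5, 0, 5, 6), (5, 0, 5, 1, 0, 5), (5, 0, 5, 2, 1, 4), (5, 0, 5, 3, 2, 3), (5, 0, 5, 4, 3, 2), (5, 0, 5, 5, 4, 1), (5, 0, 5, 6, 5, 0), (5, 1, 0, 0, 0, 5), (5, 1, 0, 1, 1, 4), (5, 1, 0, 2, 2, 3), (5, 1, 0, 3, 3, 2), (5, 1, 0, 4, 4, 1), (5, 1, 0, 5, 5, 0), (5, 2, 1, 0, 1, 4), (5, 2, 1, 1, 2, 3), (5, 2, 1, 2, 3, 2), (5, 2, 1, 3, 4, 1), (5, 2, 1, 4, 5, 0), (5, 3, 2, 0, 2, 3), (5, 3, 2, 1, 3, 2), (5, 3, 2, 2, 4, 1), (5, 3, 2, 3, 5, 0), (5, 4, 3, 0, 3, 2), (5, 4, 3, 1, 4, 1), (5, 4, 3, 2,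 5, 0), (5, 5, 4, 0, 4, 1), (5, 5, 4, 1, 5, 0), (5, 6, 5, 0, 5, 0)]"
  by code_simp

lemma MP_6: "MP 6 = [(0, 0, 1, 1), (0, 1, 1, 2), (0, 2, 1, 3), (0, 3, 1, 4), (0, 4, 1, 5), (0, 5, 1, 6), (1, 0, 2, 1), (1, 1, 2, 2), (1, 2, 2, 3), (1, 3, 2, 4), (1, 4, 2, 5), (1, 5, 2, 6), (2, 0, 3, 1), (2, 1, 3, 2), (2, 2, 3, 3), (2, 3, 3, 4), (2, 4, 3, 5), (2, 5, 3, 6), (3, 0, 4, 1), (3, 1, 4, 2), (3, 2, 4, 3), (3, 3, 4, 4), (3, 4, 4, 5), (3, 5, 4, 6), (4, 0, 5, 1), (4, 1, 5, 2), (4, 2, 5, 3), (4, 3, 5, 4), (4, 4, 5, 5), (4, 5, 5, 6), (5, 0, 0, 1), (5, 1, 0, 2), (5, 2, 0, 3), (5, 3, 0, 4), (5, 4, 0, 5), (5, 5, 0, 6)]"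
  by code_simp

lemma SPL_6: "SPL 6 = [({}, {}, {..<6}), ({}, arc 6 0 1, arc 6 1 5), ({}, arc 6 0 2, arc 6 2 4), ({}, arc 6 0 3, arc 6 3 3), ({}, arc 6 0 4, arc 6 4 2), ({}, arc 6 0 5, arc 6 5 1), ({}, {..<6}, {}), (arc 6 0 1, {}, arc 6 1 5), (arc 6 0 1, arc 6 1 1, arc 6 2 4), (arc 6 0 1, arc 6 1 2, arc 6 3 3), (arc 6 0 1, arc 6 1 3, arc 6 4 2), (arc 6 0 1, arc 6 1 4, arc 6 5 1), (arc 6 0 1, arc 6 1 5, {}), (arc 6 0 2, {}, arc 6 2 4), (arc 6 0 2, arc 6 2 1, arc 6 3 3), (arc 6 0 2, arc 6 2 2, arc 6 4 2), (arc 6 0 2, arc 6 2 3, arc 6 5 1), (arc 6 0 2, arc 6 2 4, {}), (arc 6 0 3, {}, arc 6 3 3), (arc 6 0 3, arc 6 3 1, arc 6 4 2), (arc 6 0 3, arc 6 3 2, arc 6 5 1), (arc 6 0 3, arc 6 3 3, {}), (arc 6 0 4, {}, arc 6 4 2), (arc 6 0 4, arc 6 4 1, arc 6 5 1), (arc 6 0 4, arc 6 4 2, {}), (arc 6 0 5, {}, arc 6 5 1), (arc 6 0 5, arc 6 5 1, {}), ({..<6}, {}, {}), ({}, {}, {..<6}), ({}, arc 6 1 1, arc 6 2 5), ({}, arc 6 1 2, arc 6 3 4), ({}, arc 6 1 3, arc 6 4 3), ({}, arc 6 1 4, arc 6 5 2), ({}, arc 6 1 5, arc 6 0 1), ({},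 {..<6}, {}), (arc 6 1 1, {}, arc 6 2 5), (arc 6 1 1, arc 6 2 1, arc 6 3 4), (arc 6 1 1, arc 6 2 2, arc 6 4 3), (arc 6 1 1, arc 6 2 3, arc 6 5 2), (arc 6 1 1, arc 6 2 4, arc 6 0 1), (arc 6 1 1, arc 6 2 5, {}), (arc 6 1 2, {}, arc 6 3 4), (arc 6 1 2, arc 6 3 1, arc 6 4 3), (arc 6 1 2, arc 6 3 2, arc 6 5 2), (arc 6 1 2, arc 6 3 3, arc 6 0 1), (arc 6 1 2, arc 6 3 4, {}), (arc 6 1 3, {}, arc 6 4 3), (arc 6 1 3, arc 6 4 1, arc 6 5 2), (arc 6 1 3, arc 6 4 2, arc 6 0 1), (arc 6 1 3, arc 6 4 3, {}), (arc 6 1 4, {}, arc 6 5 2), (arc 6 1 4, arc 6 5 1, arc 6 0 1), (arc 6 1 4, arc 6 5 2, {}), (arc 6 1 5, {}, arc 6 0 1), (arc 6 1 5, arc 6 0 1, {}), ({..<6}, {}, {}), ({}, {}, {..<6}), ({}, arc 6 2 1, arc 6 3 5), ({}, arc 6 2 2, arc 6 4 4), ({}, arc 6 2 3, arc 6 5 3), ({}, arc 6 2 4, arc 6 0 2), ({}, arc 6 2 5, arc 6 1 1), ({}, {..<6}, {}), (arc 6 2 1, {}, arc 6 3 5), (arc 6 2 1, arc 6 3 1, arc 6 4 4), (arc 6 2 1, arc 6 3 2, arc 6 5 3), (arc 6 2 1, arc 6 3 3, arc 6 0 2), (arc 6 2 1, arc 6 3 4, arc 6 1 1), (arc 6 2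 1, arc 6 3 5, {}), (arc 6 2 2, {}, arc 6 4 4), (arc 6 2 2, arc 6 4 1, arc 6 5 3), (arc 6 2 2, arc 6 4 2, arc 6 0 2), (arc 6 2 2, arc 6 4 3, arc 6 1 1), (arc 6 2 2, arc 6 4 4, {}), (arc 6 2 3, {}, arc 6 5 3), (arc 6 2 3, arc 6 5 1, arc 6 0 2), (arc 6 2 3, arc 6 5 2, arc 6 1 1), (arc 6 2 3, arc 6 5 3, {}), (arc 6 2 4, {}, arc 6 0 2), (arc 6 2 4, arc 6 0 1, arc 6 1 1), (arc 6 2 4, arc 6 0 2, {}), (arc 6 2 5, {}, arc 6 1 1), (arc 6 2 5, arc 6 1 1, {}), ({..<6}, {}, {}), ({}, {}, {..<6}), ({}, arc 6 3 1, arc 6 4 5), ({}, arc 6 3 2, arc 6 5 4), ({}, arc 6 3 3, arc 6 0 3), ({}, arc 6 3 4, arc 6 1 2), ({}, arc 6 3 5, arc 6 2 1), ({}, {..<6}, {}), (arc 6 3 1, {}, arc 6 4 5), (arc 6 3 1, arc 6 4 1, arc 6 5 4), (arc 6 3 1, arc 6 4 2, arc 6 0 3), (arc 6 3 1, arc 6 4 3, arc 6 1 2), (arc 6 3 1, arc 6 4 4, arc 6 2 1), (arc 6 3 1, arc 6 4 5, {}), (arc 6 3 2, {}, arc 6 5 4), (arc 6 3 2, arc 6 5 1, arc 6 0 3), (arc 6 3 2, arc 6 5 2, arc 6 1 2), (arc 6 3 2, arc 6 5 3, arc 6 2 1), (arc 6 3 2, arc 6 5 4, {}), (arc 6 3 3,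 {}, arc 6 0 3), (arc 6 3 3, arc 6 0 1, arc 6 1 2), (arc 6 3 3, arc 6 0 2, arc 6 2 1), (arc 6 3 3, arc 6 0 3, {}), (arc 6 3 4, {}, arc 6 1 2), (arc 6 3 4, arc 6 1 1, arc 6 2 1), (arc 6 3 4, arc 6 1 2, {}), (arc 6 3 5, {}, arc 6 2 1), (arc 6 3 5, arc 6 2 1, {}), ({..<6}, {}, {}), ({}, {}, {..<6}), ({}, arc 6 4 1, arc 6 5 5), ({}, arc 6 4 2, arc 6 0 4), ({}, arc 6 4 3, arc 6 1 3), ({}, arc 6 4 4, arc 6 2 2), ({}, arc 6 4 5, arc 6 3 1), ({}, {..<6}, {}), (arc 6 4 1, {}, arc 6 5 5), (arc 6 4 1, arc 6 5 1, arc 6 0 4), (arc 6 4 1, arc 6 5 2, arc 6 1 3), (arc 6 4 1, arc 6 5 3, arc 6 2 2), (arc 6 4 1, arc 6 5 4, arc 6 3 1), (arc 6 4 1, arc 6 5 5, {}), (arc 6 4 2, {}, arc 6 0 4), (arc 6 4 2, arc 6 0 1, arc 6 1 3), (arc 6 4 2, arc 6 0 2, arc 6 2 2), (arc 6 4 2, arc 6 0 3, arc 6 3 1), (arc 6 4 2, arc 6 0 4, {}), (arc 6 4 3, {}, arc 6 1 3), (arc 6 4 3, arc 6 1 1, arc 6 2 2), (arc 6 4 3, arc 6 1 2, arc 6 3 1), (arc 6 4 3, arc 6 1 3, {}), (arc 6 4 4, {}, arc 6 2 2), (arc 6 4 4, arc 6 2 1, arc 6 3 1), (arc 6 4 4,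 arc 6 2 2, {}), (arc 6 4 5, {}, arc 6 3 1), (arc 6 4 5, arc 6 3 1, {}), ({..<6}, {}, {}), ({}, {}, {..<6}), ({}, arc 6 5 1, arc 6 0 5), ({}, arc 6 5 2, arc 6 1 4), ({}, arc 6 5 3, arc 6 2 3), ({}, arc 6 5 4, arc 6 3 2), ({}, arc 6 5 5, arc 6 4 1), ({}, {..<6}, {}), (arc 6 5 1, {}, arc 6 0 5), (arc 6 5 1, arc 6 0 1, arc 6 1 4), (arc 6 5 1, arc 6 0 2, arc 6 2 3), (arc 6 5 1, arc 6 0 3, arc 6 3 2), (arc 6 5 1, arc 6 0 4, arc 6 4 1), (arc 6 5 1, arc 6 0 5, {}), (arc 6 5 2, {}, arc 6 1 4), (arc 6 5 2, arc 6 1 1, arc 6 2 3), (arc 6 5 2, arc 6 1 2, arc 6 3 2), (arc 6 5 2, arc 6 1 3, arc 6 4 1), (arc 6 5 2, arc 6 1 4, {}), (arc 6 5 3, {}, arc 6 2 3), (arc 6 5 3, arc 6 2 1, arc 6 3 2), (arc 6 5 3, arc 6 2 2, arc 6 4 1), (arc 6 5 3, arc 6 2 3, {}), (arc 6 5 4, {}, arc 6 3 2), (arc 6 5 4, arc 6 3 1, arc 6 4 1), (arc 6 5 4, arc 6 3 2, {}), (arc 6 5 5, {}, arc 6 4 1), (arc 6 5 5, arc 6 4 1, {}), ({..<6}, {}, {})]"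
  unfolding SPL_alt T6_6 by (simp add: arc_full)

lemma SPLH_6: "SPLH 6 = [(arc 6 0 1, {}, arc 6 1 5), (arc 6 0 1, arc 6 1 1, arc 6 2 4), (arc 6 0 1, arc 6 1 2, arc 6 3 3), (arc 6 0 1, arc 6 1 3, arc 6 4 2), (arc 6 0 1, arc 6 1 4, arc 6 5 1), (arc 6 0 1, arc 6 1 5, {}), (arc 6 0 2, {}, arc 6 2 4), (arc 6 0 2, arc 6 2 1, arc 6 3 3), (arc 6 0 2, arc 6 2 2, arc 6 4 2), (arc 6 0 2, arc 6 2 3, arc 6 5 1), (arc 6 0 2, arc 6 2 4, {}), (arc 6 0 3, {}, arc 6 3 3), (arc 6 0 3, arc 6 3 1, arc 6 4 2), (arc 6 0 3, arc 6 3 2, arc 6 5 1), (arc 6 0 3, arc 6 3 3, {}), (arc 6 0 4, {}, arc 6 4 2), (arc 6 0 4, arc 6 4 1, arc 6 5 1), (arc 6 0 4, arc 6 4 2, {}), (arc 6 0 5, {}, arc 6 5 1), (arc 6 0 5, arc 6 5 1, {}), ({..<6}, {}, {}), ({..<6}, {}, {}), (arc 6 2 5, {}, arc 6 1 1), (arc 6 2 5, arc 6 1 1, {}), ({..<6}, {}, {}), (arc 6 3 4, {}, arc 6 1 2), (arc 6 3 4, arc 6 1 1, arc 6 2 1), (arc 6 3 4, arc 6 1 2, {}), (arc 6 3 5, {}, arc 6 2 1), (arc 6 3 5, arc 6 2 1, {}), ({..<6}, {}, {}), (arc 6 4 3, {}, arc 6 1 3), (arc 6 4 3, arc 6 1 1,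 arc 6 2 2), (arc 6 4 3, arc 6 1 2, arc 6 3 1), (arc 6 4 3, arc 6 1 3, {}), (arc 6 4 4, {}, arc 6 2 2), (arc 6 4 4, arc 6 2 1, arc 6 3 1), (arc 6 4 4, arc 6 2 2, {}), (arc 6 4 5, {}, arc 6 3 1), (arc 6 4 5, arc 6 3 1, {}), ({..<6}, {}, {}), (arc 6 5 2, {}, arc 6 1 4), (arc 6 5 2, arc 6 1 1, arc 6 2 3), (arc 6 5 2, arc 6 1 2, arc 6 3 2), (arc 6 5 2, arc 6 1 3, arc 6 4 1), (arc 6 5 2, arc 6 1 4, {}), (arc 6 5 3, {}, arc 6 2 3), (arc 6 5 3, arc 6 2 1, arc 6 3 2), (arc 6 5 3, arc 6 2 2, arc 6 4 1), (arc 6 5 3, arc 6 2 3, {}), (arc 6 5 4, {}, arc 6 3 2), (arc 6 5 4, arc 6 3 1, arc 6 4 1), (arc 6 5 4, arc 6 3 2, {}), (arc 6 5 5, {}, arc 6 4 1), (arc 6 5 5, arc 6 4 1, {}), ({..<6}, {}, {})]"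
  unfolding SPLH_def T6_6 by (simp add: arc_full)

lemma MONO_6: "MONO 6 = [({}, arc 6 0 1), (arc 6 0 1, arc 6 0 2), (arc 6 0 2, arc 6 0 3), (arc 6 0 3, arc 6 0 4), (arc 6 0 4, arc 6 0 5), (arc 6 0 5, {..<6}), ({}, arc 6 1 1), (arc 6 1 1, arc 6 1 2), (arc 6 1 2, arc 6 1 3), (arc 6 1 3, arc 6 1 4), (arc 6 1 4, arc 6 1 5), (arc 6 1 5, {..<6}), ({}, arc 6 2 1), (arc 6 2 1, arc 6 2 2), (arc 6 2 2, arc 6 2 3), (arc 6 2 3, arc 6 2 4), (arc 6 2 4, arc 6 2 5), (arc 6 2 5, {..<6}), ({}, arc 6 3 1), (arc 6 3 1, arc 6 3 2), (arc 6 3 2, arc 6 3 3), (arc 6 3 3, arc 6 3 4), (arc 6 3 4, arc 6 3 5), (arc 6 3 5, {..<6}), ({}, arc 6 4 1), (arc 6 4 1, arc 6 4 2), (arc 6 4 2, arc 6 4 3), (arc 6 4 3, arc 6 4 4), (arc 6 4 4, arc 6 4 5), (arc 6 4 5, {..<6}), ({}, arc 6 5 1), (arc 6 5 1, arc 6 5 2), (arc 6 5 2, arc 6 5 3), (arc 6 5 3, arc 6 5 4), (arc 6 5 4, arc 6 5 5), (arc 6 5 5, {..<6}), ({}, arc 6 0 1), (arc 6 1 1, arc 6 0 2), (arc 6 1 2, arc 6 0 3), (arc 6 1 3, arc 6 0 4), (arc 6 1 4, arc 6 0 5), (arc 6 1 5, {..<6}), ({}, arc 6 1 1), (arc 6 2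 1, arc 6 1 2), (arc 6 2 2, arc 6 1 3), (arc 6 2 3, arc 6 1 4), (arc 6 2 4, arc 6 1 5), (arc 6 2 5, {..<6}), ({}, arc 6 2 1), (arc 6 3 1, arc 6 2 2), (arc 6 3 2, arc 6 2 3), (arc 6 3 3, arc 6 2 4), (arc 6 3 4, arc 6 2 5), (arc 6 3 5, {..<6}), ({}, arc 6 3 1), (arc 6 4 1, arc 6 3 2), (arc 6 4 2, arc 6 3 3), (arc 6 4 3, arc 6 3 4), (arc 6 4 4, arc 6 3 5), (arc 6 4 5, {..<6}), ({}, arc 6 4 1), (arc 6 5 1, arc 6 4 2), (arc 6 5 2, arc 6 4 3), (arc 6 5 3, arc 6 4 4), (arc 6 5 4, arc 6 4 5), (arc 6 5 5, {..<6}), ({}, arc 6 5 1), (arc 6 0 1, arc 6 5 2), (arc 6 0 2, arc 6 5 3), (arc 6 0 3, arc 6 5 4), (arc 6 0 4, arc 6 5 5), (arc 6 0 5, {..<6})]"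
  unfolding MONO_alt MP_6 by (simp add: arc_full)

lemma COMB_6: "COMB 6"
  unfolding COMB_def
  apply (intro allI impI)
  subgoal for A0 A1 A2
    using T3_all[of A0 "SPLH 6"] T3_all[of A1 "SPLH 6"] T3_all[of A2 "SPLH 6"]
    unfolding HYP_def SPL_6 SPLH_6 MONO_6 list_ex_Nil_iff list_ex_Cons_iff list_all_Nil_iff list_all_Cons_iff prod.case
    by satx
  done

lemma T6_7: "T6 7 = [(0, 0, 0, 0, 0, 7), (0, 0, 0, 1, 1, 6), (0, 0, 0, 2, 2, 5), (0, 0, 0, 3, 3, 4), (0, 0, 0, 4, 4, 3), (0, 0, 0, 5, 5, 2), (0, 0, 0, 6, 6, 1), (0, 0, 0, 7, 0, 0), (0, 1, 1, 0, 1, 6), (0, 1, 1, 1, 2, 5), (0, 1, 1, 2, 3, 4), (0, 1, 1, 3, 4, 3), (0, 1, 1, 4, 5, 2), (0, 1, 1, 5, 6, 1), (0, 1, 1, 6, 0, 0), (0, 2, 2, 0, 2, 5), (0, 2, 2, 1, 3, 4), (0, 2, 2, 2, 4, 3), (0, 2, 2, 3, 5, 2), (0, 2, 2, 4, 6, 1), (0, 2, 2, 5, 0, 0), (0, 3, 3, 0, 3, 4), (0, 3, 3, 1, 4, 3), (0, 3, 3, 2, 5, 2), (0, 3, 3, 3, 6, 1), (0, 3, 3, 4, 0, 0), (0, 4, 4, 0, 4, 3), (0, 4, 4, 1, 5, 2), (0, 4, 4, 2, 6, 1), (0, 4, 4, 3, 0, 0), (0, 5, 5, 0, 5, 2), (0,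 5, 5, 1, 6, 1), (0, 5, 5, 2, 0, 0), (0, 6, 6, 0, 6, 1), (0, 6, 6, 1, 0, 0), (0, 7, 0, 0, 0, 0), (1, 0, 1, 0, 1, 7), (1, 0, 1, 1, 2, 6), (1, 0, 1, 2, 3, 5), (1, 0, 1, 3, 4, 4), (1, 0, 1, 4, 5, 3), (1, 0, 1, 5, 6, 2), (1, 0, 1, 6, 0, 1), (1, 0, 1, 7, 1, 0), (1, 1, 2, 0, 2, 6), (1, 1, 2, 1, 3, 5), (1, 1, 2, 2, 4, 4), (1, 1, 2, 3, 5, 3), (1, 1, 2, 4, 6, 2), (1, 1, 2, 5, 0, 1), (1, 1, 2, 6, 1, 0), (1, 2, 3, 0, 3, 5), (1, 2, 3, 1, 4, 4), (1, 2, 3, 2, 5, 3), (1, 2, 3, 3, 6, 2), (1, 2, 3, 4, 0, 1), (1, 2, 3, 5, 1, 0), (1, 3, 4, 0, 4, 4), (1, 3, 4, 1, 5, 3), (1, 3, 4, 2, 6, 2), (1, 3, 4, 3, 0, 1), (1, 3, 4, 4, 1, 0), (1, 4, 5, 0, 5, 3), (1, 4, 5, 1, 6, 2), (1, 4, 5, 2, 0, 1), (1, 4, 5, 3, 1, 0), (1, 5, 6, 0, 6, 2), (1, 5, 6, 1, 0, 1), (1, 5, 6, 2, 1, 0), (1, 6, 0, 0, 0, 1), (1, 6, 0, 1, 1, 0), (1, 7, 1, 0, 1, 0), (2, 0, 2, 0, 2, 7), (2, 0, 2, 1, 3, 6), (2, 0, 2, 2, 4, 5), (2, 0, 2, 3,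 5, 4), (2, 0, 2, 4, 6, 3), (2, 0, 2, 5, 0, 2), (2, 0, 2, 6, 1, 1), (2, 0, 2, 7, 2, 0), (2, 1, 3, 0, 3, 6), (2, 1, 3, 1, 4, 5), (2, 1, 3, 2, 5, 4), (2, 1, 3, 3, 6, 3), (2, 1, 3, 4, 0, 2), (2, 1, 3, 5, 1, 1), (2, 1, 3, 6, 2, 0), (2, 2, 4, 0, 4, 5), (2, 2, 4, 1, 5, 4), (2, 2, 4, 2, 6, 3), (2, 2, 4, 3, 0, 2), (2, 2, 4, 4, 1, 1), (2, 2, 4, 5, 2, 0), (2, 3, 5, 0, 5, 4), (2, 3, 5, 1, 6, 3), (2, 3, 5, 2, 0, 2), (2, 3, 5, 3, 1, 1), (2, 3, 5, 4, 2, 0), (2, 4, 6, 0, 6, 3), (2, 4, 6, 1, 0, 2), (2, 4, 6, 2, 1, 1), (2, 4, 6, 3, 2, 0), (2, 5, 0, 0, 0, 2), (2, 5, 0, 1, 1, 1), (2, 5, 0, 2, 2, 0), (2, 6, 1, 0, 1, 1), (2, 6, 1, 1, 2, 0), (2, 7, 2, 0, 2, 0), (3, 0, 3, 0, 3, 7), (3, 0, 3, 1, 4, 6), (3, 0, 3, 2, 5, 5), (3, 0, 3, 3, 6, 4), (3, 0, 3, 4, 0, 3), (3, 0, 3, 5, 1, 2), (3, 0, 3, 6, 2, 1), (3, 0, 3, 7, 3, 0), (3, 1, 4, 0, 4, 6), (3, 1, 4, 1, 5, 5), (3, 1, 4, 2, 6, 4), (3, 1, 4, 3, 0, 3), (3,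 1, 4, 4, 1, 2), (3, 1, 4, 5, 2, 1), (3, 1, 4, 6, 3, 0), (3, 2, 5, 0, 5, 5), (3, 2, 5, 1, 6, 4), (3, 2, 5, 2, 0, 3), (3, 2, 5, 3, 1, 2), (3, 2, 5, 4, 2, 1), (3, 2, 5, 5, 3, 0), (3, 3, 6, 0, 6, 4), (3, 3, 6, 1, 0, 3), (3, 3, 6, 2, 1, 2), (3, 3, 6, 3, 2, 1), (3, 3, 6, 4, 3, 0), (3, 4, 0, 0, 0, 3), (3, 4, 0, 1, 1, 2), (3, 4, 0, 2, 2, 1), (3, 4, 0, 3, 3, 0), (3, 5, 1, 0, 1, 2), (3, 5, 1, 1, 2, 1), (3, 5, 1, 2, 3, 0), (3, 6, 2, 0, 2, 1), (3, 6, 2, 1, 3, 0), (3, 7, 3, 0, 3, 0), (4, 0, 4, 0, 4, 7), (4, 0, 4, 1, 5, 6), (4, 0, 4, 2, 6, 5), (4, 0, 4, 3, 0, 4), (4, 0, 4, 4, 1, 3), (4, 0, 4, 5, 2, 2), (4, 0, 4, 6, 3, 1), (4, 0, 4, 7, 4, 0), (4, 1, 5, 0, 5, 6), (4, 1, 5, 1, 6, 5), (4, 1, 5, 2, 0, 4), (4, 1, 5, 3, 1, 3), (4, 1, 5, 4, 2, 2), (4, 1, 5, 5, 3, 1), (4, 1, 5, 6, 4, 0), (4, 2, 6, 0, 6, 5), (4, 2, 6, 1, 0, 4), (4, 2, 6, 2, 1, 3), (4, 2, 6, 3, 2, 2), (4, 2, 6, 4, 3, 1), (4, 2, 6, 5,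 4, 0), (4, 3, 0, 0, 0, 4), (4, 3, 0, 1, 1, 3), (4, 3, 0, 2, 2, 2), (4, 3, 0, 3, 3, 1), (4, 3, 0, 4, 4, 0), (4, 4, 1, 0, 1, 3), (4, 4, 1, 1, 2, 2), (4, 4, 1, 2, 3, 1), (4, 4, 1, 3, 4, 0), (4, 5, 2, 0, 2, 2), (4, 5, 2, 1, 3, 1), (4, 5, 2, 2, 4, 0), (4, 6, 3, 0, 3, 1), (4, 6, 3, 1, 4, 0), (4, 7, 4, 0, 4, 0), (5, 0, 5, 0, 5, 7), (5, 0, 5, 1, 6, 6), (5, 0, 5, 2, 0, 5), (5, 0, 5, 3, 1, 4), (5, 0, 5, 4, 2, 3), (5, 0, 5, 5, 3, 2), (5, 0, 5, 6, 4, 1), (5, 0, 5, 7, 5, 0), (5, 1, 6, 0, 6, 6), (5, 1, 6, 1, 0, 5), (5, 1, 6, 2, 1, 4), (5, 1, 6, 3, 2, 3), (5, 1, 6, 4, 3, 2), (5, 1, 6, 5, 4, 1), (5, 1, 6, 6, 5, 0), (5, 2, 0, 0, 0, 5), (5, 2, 0, 1, 1, 4), (5, 2, 0, 2, 2, 3), (5, 2, 0, 3, 3, 2), (5, 2, 0, 4, 4, 1), (5, 2, 0, 5, 5, 0), (5, 3, 1, 0, 1, 4), (5, 3, 1, 1, 2, 3), (5, 3, 1, 2, 3, 2), (5, 3, 1, 3, 4, 1), (5, 3, 1, 4, 5, 0), (5, 4, 2, 0, 2, 3), (5, 4, 2, 1, 3, 2), (5, 4, 2, 2, 4, 1), (5,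 4, 2, 3, 5, 0), (5, 5, 3, 0, 3, 2), (5, 5, 3, 1, 4, 1), (5, 5, 3, 2, 5, 0), (5, 6, 4, 0, 4, 1), (5, 6, 4, 1, 5, 0), (5, 7, 5, 0, 5, 0), (6, 0, 6, 0, 6, 7), (6, 0, 6, 1, 0, 6), (6, 0, 6, 2, 1, 5), (6, 0, 6, 3, 2, 4), (6, 0, 6, 4, 3, 3), (6, 0, 6, 5, 4, 2), (6, 0, 6, 6, 5, 1), (6, 0, 6, 7, 6, 0), (6, 1, 0, 0, 0, 6), (6, 1, 0, 1, 1, 5), (6, 1, 0, 2, 2, 4), (6, 1, 0, 3, 3, 3), (6, 1, 0, 4, 4, 2), (6, 1, 0, 5, 5, 1), (6, 1, 0, 6, 6, 0), (6, 2, 1, 0, 1, 5), (6, 2, 1, 1, 2, 4), (6, 2, 1, 2, 3, 3), (6, 2, 1, 3, 4, 2), (6, 2, 1, 4, 5, 1), (6, 2, 1, 5, 6, 0), (6, 3, 2, 0, 2, 4), (6, 3, 2, 1, 3, 3), (6, 3, 2, 2, 4, 2), (6, 3, 2, 3, 5, 1), (6, 3, 2, 4, 6, 0), (6, 4, 3, 0, 3, 3), (6, 4, 3, 1, 4, 2), (6, 4, 3, 2, 5, 1), (6, 4, 3, 3, 6, 0), (6, 5, 4, 0, 4, 2), (6, 5, 4, 1, 5, 1), (6, 5, 4, 2, 6, 0), (6, 6, 5, 0, 5, 1), (6, 6, 5, 1, 6, 0), (6, 7, 6, 0, 6, 0)]"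
  by code_simp

lemma MP_7: "MP 7 = [(0, 0, 1, 1), (0, 1, 1, 2), (0, 2, 1, 3), (0, 3, 1, 4), (0, 4, 1, 5), (0, 5, 1, 6), (0, 6, 1, 7), (1, 0, 2, 1), (1, 1, 2, 2), (1, 2, 2, 3), (1, 3, 2, 4), (1, 4, 2, 5), (1, 5, 2, 6), (1, 6, 2, 7), (2, 0, 3, 1), (2, 1, 3, 2), (2, 2, 3, 3), (2, 3, 3, 4), (2, 4, 3, 5), (2, 5, 3, 6), (2, 6, 3, 7), (3, 0, 4, 1), (3, 1, 4, 2), (3, 2, 4, 3), (3, 3, 4, 4), (3, 4, 4, 5), (3, 5, 4, 6), (3, 6, 4, 7), (4, 0, 5, 1), (4, 1, 5, 2), (4, 2, 5, 3), (4, 3, 5, 4), (4, 4, 5, 5), (4, 5, 5, 6), (4, 6, 5, 7), (5, 0, 6, 1), (5, 1, 6, 2), (5, 2, 6, 3), (5, 3, 6, 4), (5, 4, 6, 5), (5, 5, 6, 6), (5, 6, 6, 7), (6, 0, 0, 1), (6, 1, 0, 2), (6, 2, 0, 3), (6, 3, 0, 4), (6, 4, 0, 5), (6, 5, 0, 6), (6, 6, 0, 7)]"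
  by code_simp

lemma SPL_7: "SPL 7 = [({}, {}, {..<7}), ({}, arc 7 0 1, arc 7 1 6), ({}, arc 7 0 2, arc 7 2 5), ({}, arc 7 0 3, arc 7 3 4), ({}, arc 7 0 4, arc 7 4 3), ({}, arc 7 0 5, arc 7 5 2), ({}, arc 7 0 6, arc 7 6 1), ({}, {..<7}, {}), (arc 7 0 1, {}, arc 7 1 6), (arc 7 0 1, arc 7 1 1, arc 7 2 5), (arc 7 0 1, arc 7 1 2, arc 7 3 4), (arc 7 0 1, arc 7 1 3, arc 7 4 3), (arc 7 0 1, arc 7 1 4, arc 7 5 2), (arc 7 0 1, arc 7 1 5, arc 7 6 1), (arc 7 0 1, arc 7 1 6, {}), (arc 7 0 2, {}, arc 7 2 5), (arc 7 0 2, arc 7 2 1, arc 7 3 4), (arc 7 0 2, arc 7 2 2, arc 7 4 3), (arc 7 0 2, arc 7 2 3, arc 7 5 2), (arc 7 0 2, arc 7 2 4, arc 7 6 1), (arc 7 0 2, arc 7 2 5, {}), (arc 7 0 3, {}, arc 7 3 4), (arc 7 0 3, arc 7 3 1, arc 7 4 3), (arc 7 0 3, arc 7 3 2, arc 7 5 2), (arc 7 0 3, arc 7 3 3, arc 7 6 1), (arc 7 0 3, arc 7 3 4, {}), (arc 7 0 4, {}, arc 7 4 3), (arc 7 0 4, arc 7 4 1, arc 7 5 2), (arc 7 0 4, arc 7 4 2, arc 7 6 1), (arc 7 0 4, arc 7 4 3, {}), (arc 7 0 5, {}, arc 7 5 2), (arc 7 0 5, arc 7 5 1, arc 7 6 1),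 (arc 7 0 5, arc 7 5 2, {}), (arc 7 0 6, {}, arc 7 6 1), (arc 7 0 6, arc 7 6 1, {}), ({..<7}, {}, {}), ({}, {}, {..<7}), ({}, arc 7 1 1, arc 7 2 6), ({}, arc 7 1 2, arc 7 3 5), ({}, arc 7 1 3, arc 7 4 4), ({}, arc 7 1 4, arc 7 5 3), ({}, arc 7 1 5, arc 7 6 2), ({}, arc 7 1 6, arc 7 0 1), ({}, {..<7}, {}), (arc 7 1 1, {}, arc 7 2 6), (arc 7 1 1, arc 7 2 1, arc 7 3 5), (arc 7 1 1, arc 7 2 2, arc 7 4 4), (arc 7 1 1, arc 7 2 3, arc 7 5 3), (arc 7 1 1, arc 7 2 4, arc 7 6 2), (arc 7 1 1, arc 7 2 5, arc 7 0 1), (arc 7 1 1, arc 7 2 6, {}), (arc 7 1 2, {}, arc 7 3 5), (arc 7 1 2, arc 7 3 1, arc 7 4 4), (arc 7 1 2, arc 7 3 2, arc 7 5 3), (arc 7 1 2, arc 7 3 3, arc 7 6 2), (arc 7 1 2, arc 7 3 4, arc 7 0 1), (arc 7 1 2, arc 7 3 5, {}), (arc 7 1 3, {}, arc 7 4 4), (arc 7 1 3, arc 7 4 1, arc 7 5 3), (arc 7 1 3, arc 7 4 2, arc 7 6 2), (arc 7 1 3, arc 7 4 3, arc 7 0 1), (arc 7 1 3, arc 7 4 4, {}), (arc 7 1 4, {}, arc 7 5 3), (arc 7 1 4, arc 7 5 1, arc 7 6 2), (arc 7 1 4, arc 7 5 2, arc 7 0 1), (arc 7 1 4, arc 7 5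 3, {}), (arc 7 1 5, {}, arc 7 6 2), (arc 7 1 5, arc 7 6 1, arc 7 0 1), (arc 7 1 5, arc 7 6 2, {}), (arc 7 1 6, {}, arc 7 0 1), (arc 7 1 6, arc 7 0 1, {}), ({..<7}, {}, {}), ({}, {}, {..<7}), ({}, arc 7 2 1, arc 7 3 6), ({}, arc 7 2 2, arc 7 4 5), ({}, arc 7 2 3, arc 7 5 4), ({}, arc 7 2 4, arc 7 6 3), ({}, arc 7 2 5, arc 7 0 2), ({}, arc 7 2 6, arc 7 1 1), ({}, {..<7}, {}), (arc 7 2 1, {}, arc 7 3 6), (arc 7 2 1, arc 7 3 1, arc 7 4 5), (arc 7 2 1, arc 7 3 2, arc 7 5 4), (arc 7 2 1, arc 7 3 3, arc 7 6 3), (arc 7 2 1, arc 7 3 4, arc 7 0 2), (arc 7 2 1, arc 7 3 5, arc 7 1 1), (arc 7 2 1, arc 7 3 6, {}), (arc 7 2 2, {}, arc 7 4 5), (arc 7 2 2, arc 7 4 1, arc 7 5 4), (arc 7 2 2, arc 7 4 2, arc 7 6 3), (arc 7 2 2, arc 7 4 3, arc 7 0 2), (arc 7 2 2, arc 7 4 4, arc 7 1 1), (arc 7 2 2, arc 7 4 5, {}), (arc 7 2 3, {}, arc 7 5 4), (arc 7 2 3, arc 7 5 1, arc 7 6 3), (arc 7 2 3, arc 7 5 2, arc 7 0 2), (arc 7 2 3, arc 7 5 3, arc 7 1 1), (arc 7 2 3, arc 7 5 4, {}), (arc 7 2 4, {}, arc 7 6 3), (arc 7 2 4, arc 7 6 1,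 arc 7 0 2), (arc 7 2 4, arc 7 6 2, arc 7 1 1), (arc 7 2 4, arc 7 6 3, {}), (arc 7 2 5, {}, arc 7 0 2), (arc 7 2 5, arc 7 0 1, arc 7 1 1), (arc 7 2 5, arc 7 0 2, {}), (arc 7 2 6, {}, arc 7 1 1), (arc 7 2 6, arc 7 1 1, {}), ({..<7}, {}, {}), ({}, {}, {..<7}), ({}, arc 7 3 1, arc 7 4 6), ({}, arc 7 3 2, arc 7 5 5), ({}, arc 7 3 3, arc 7 6 4), ({}, arc 7 3 4, arc 7 0 3), ({}, arc 7 3 5, arc 7 1 2), ({}, arc 7 3 6, arc 7 2 1), ({}, {..<7}, {}), (arc 7 3 1, {}, arc 7 4 6), (arc 7 3 1, arc 7 4 1, arc 7 5 5), (arc 7 3 1, arc 7 4 2, arc 7 6 4), (arc 7 3 1, arc 7 4 3, arc 7 0 3), (arc 7 3 1, arc 7 4 4, arc 7 1 2), (arc 7 3 1, arc 7 4 5, arc 7 2 1), (arc 7 3 1, arc 7 4 6, {}), (arc 7 3 2, {}, arc 7 5 5), (arc 7 3 2, arc 7 5 1, arc 7 6 4), (arc 7 3 2, arc 7 5 2, arc 7 0 3), (arc 7 3 2, arc 7 5 3, arc 7 1 2), (arc 7 3 2, arc 7 5 4, arc 7 2 1), (arc 7 3 2, arc 7 5 5, {}), (arc 7 3 3, {}, arc 7 6 4), (arc 7 3 3, arc 7 6 1, arc 7 0 3), (arc 7 3 3, arc 7 6 2, arc 7 1 2), (arc 7 3 3, arc 7 6 3, arc 7 2 1), (arc 7 3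 3, arc 7 6 4, {}), (arc 7 3 4, {}, arc 7 0 3), (arc 7 3 4, arc 7 0 1, arc 7 1 2), (arc 7 3 4, arc 7 0 2, arc 7 2 1), (arc 7 3 4, arc 7 0 3, {}), (arc 7 3 5, {}, arc 7 1 2), (arc 7 3 5, arc 7 1 1, arc 7 2 1), (arc 7 3 5, arc 7 1 2, {}), (arc 7 3 6, {}, arc 7 2 1), (arc 7 3 6, arc 7 2 1, {}), ({..<7}, {}, {}), ({}, {}, {..<7}), ({}, arc 7 4 1, arc 7 5 6), ({}, arc 7 4 2, arc 7 6 5), ({}, arc 7 4 3, arc 7 0 4), ({}, arc 7 4 4, arc 7 1 3), ({}, arc 7 4 5, arc 7 2 2), ({}, arc 7 4 6, arc 7 3 1), ({}, {..<7}, {}), (arc 7 4 1, {}, arc 7 5 6), (arc 7 4 1, arc 7 5 1, arc 7 6 5), (arc 7 4 1, arc 7 5 2, arc 7 0 4), (arc 7 4 1, arc 7 5 3, arc 7 1 3), (arc 7 4 1, arc 7 5 4, arc 7 2 2), (arc 7 4 1, arc 7 5 5, arc 7 3 1), (arc 7 4 1, arc 7 5 6, {}), (arc 7 4 2, {}, arc 7 6 5), (arc 7 4 2, arc 7 6 1, arc 7 0 4), (arc 7 4 2, arc 7 6 2, arc 7 1 3), (arc 7 4 2, arc 7 6 3, arc 7 2 2), (arc 7 4 2, arc 7 6 4, arc 7 3 1), (arc 7 4 2, arc 7 6 5, {}), (arc 7 4 3, {}, arc 7 0 4), (arc 7 4 3, arc 7 0 1, arc 7 1 3), (arc 7 4 3,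 arc 7 0 2, arc 7 2 2), (arc 7 4 3, arc 7 0 3, arc 7 3 1), (arc 7 4 3, arc 7 0 4, {}), (arc 7 4 4, {}, arc 7 1 3), (arc 7 4 4, arc 7 1 1, arc 7 2 2), (arc 7 4 4, arc 7 1 2, arc 7 3 1), (arc 7 4 4, arc 7 1 3, {}), (arc 7 4 5, {}, arc 7 2 2), (arc 7 4 5, arc 7 2 1, arc 7 3 1), (arc 7 4 5, arc 7 2 2, {}), (arc 7 4 6, {}, arc 7 3 1), (arc 7 4 6, arc 7 3 1, {}), ({..<7}, {}, {}), ({}, {}, {..<7}), ({}, arc 7 5 1, arc 7 6 6), ({}, arc 7 5 2, arc 7 0 5), ({}, arc 7 5 3, arc 7 1 4), ({}, arc 7 5 4, arc 7 2 3), ({}, arc 7 5 5, arc 7 3 2), ({}, arc 7 5 6, arc 7 4 1), ({}, {..<7}, {}), (arc 7 5 1, {}, arc 7 6 6), (arc 7 5 1, arc 7 6 1, arc 7 0 5), (arc 7 5 1, arc 7 6 2, arc 7 1 4), (arc 7 5 1, arc 7 6 3, arc 7 2 3), (arc 7 5 1, arc 7 6 4, arc 7 3 2), (arc 7 5 1, arc 7 6 5, arc 7 4 1), (arc 7 5 1, arc 7 6 6, {}), (arc 7 5 2, {}, arc 7 0 5), (arc 7 5 2, arc 7 0 1, arc 7 1 4), (arc 7 5 2, arc 7 0 2, arc 7 2 3), (arc 7 5 2, arc 7 0 3, arc 7 3 2), (arc 7 5 2, arc 7 0 4, arc 7 4 1), (arc 7 5 2, arc 7 0 5, {}), (arc 7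 5 3, {}, arc 7 1 4), (arc 7 5 3, arc 7 1 1, arc 7 2 3), (arc 7 5 3, arc 7 1 2, arc 7 3 2), (arc 7 5 3, arc 7 1 3, arc 7 4 1), (arc 7 5 3, arc 7 1 4, {}), (arc 7 5 4, {}, arc 7 2 3), (arc 7 5 4, arc 7 2 1, arc 7 3 2), (arc 7 5 4, arc 7 2 2, arc 7 4 1), (arc 7 5 4, arc 7 2 3, {}), (arc 7 5 5, {}, arc 7 3 2), (arc 7 5 5, arc 7 3 1, arc 7 4 1), (arc 7 5 5, arc 7 3 2, {}), (arc 7 5 6, {}, arc 7 4 1), (arc 7 5 6, arc 7 4 1, {}), ({..<7}, {}, {}), ({}, {}, {..<7}), ({}, arc 7 6 1, arc 7 0 6), ({}, arc 7 6 2, arc 7 1 5), ({}, arc 7 6 3, arc 7 2 4), ({}, arc 7 6 4, arc 7 3 3), ({}, arc 7 6 5, arc 7 4 2), ({}, arc 7 6 6, arc 7 5 1), ({}, {..<7}, {}), (arc 7 6 1, {}, arc 7 0 6), (arc 7 6 1, arc 7 0 1, arc 7 1 5), (arc 7 6 1, arc 7 0 2, arc 7 2 4), (arc 7 6 1, arc 7 0 3, arc 7 3 3), (arc 7 6 1, arc 7 0 4, arc 7 4 2), (arc 7 6 1, arc 7 0 5, arc 7 5 1), (arc 7 6 1, arc 7 0 6, {}), (arc 7 6 2, {}, arc 7 1 5), (arc 7 6 2, arc 7 1 1, arc 7 2 4), (arc 7 6 2, arc 7 1 2, arc 7 3 3), (arc 7 6 2, arc 7 1 3, arc 7 4 2),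 (arc 7 6 2, arc 7 1 4, arc 7 5 1), (arc 7 6 2, arc 7 1 5, {}), (arc 7 6 3, {}, arc 7 2 4), (arc 7 6 3, arc 7 2 1, arc 7 3 3), (arc 7 6 3, arc 7 2 2, arc 7 4 2), (arc 7 6 3, arc 7 2 3, arc 7 5 1), (arc 7 6 3, arc 7 2 4, {}), (arc 7 6 4, {}, arc 7 3 3), (arc 7 6 4, arc 7 3 1, arc 7 4 2), (arc 7 6 4, arc 7 3 2, arc 7 5 1), (arc 7 6 4, arc 7 3 3, {}), (arc 7 6 5, {}, arc 7 4 2), (arc 7 6 5, arc 7 4 1, arc 7 5 1), (arc 7 6 5, arc 7 4 2, {}), (arc 7 6 6, {}, arc 7 5 1), (arc 7 6 6, arc 7 5 1, {}), ({..<7}, {}, {})]"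
  unfolding SPL_alt T6_7 by (simp add: arc_full)

lemma SPLH_7: "SPLH 7 = [(arc 7 0 1, {}, arc 7 1 6), (arc 7 0 1, arc 7 1 1, arc 7 2 5), (arc 7 0 1, arc 7 1 2, arc 7 3 4), (arc 7 0 1, arc 7 1 3, arc 7 4 3), (arc 7 0 1, arc 7 1 4, arc 7 5 2), (arc 7 0 1, arc 7 1 5, arc 7 6 1), (arc 7 0 1, arc 7 1 6, {}), (arc 7 0 2, {}, arc 7 2 5), (arc 7 0 2, arc 7 2 1, arc 7 3 4), (arc 7 0 2, arc 7 2 2, arc 7 4 3), (arc 7 0 2, arc 7 2 3, arc 7 5 2), (arc 7 0 2, arc 7 2 4, arc 7 6 1), (arc 7 0 2, arc 7 2 5, {}), (arc 7 0 3, {}, arc 7 3 4), (arc 7 0 3, arc 7 3 1, arc 7 4 3), (arc 7 0 3, arc 7 3 2, arc 7 5 2), (arc 7 0 3, arc 7 3 3, arc 7 6 1), (arc 7 0 3, arc 7 3 4, {}), (arc 7 0 4, {}, arc 7 4 3), (arc 7 0 4, arc 7 4 1, arc 7 5 2), (arc 7 0 4, arc 7 4 2, arc 7 6 1), (arc 7 0 4, arc 7 4 3, {}), (arc 7 0 5, {}, arc 7 5 2), (arc 7 0 5, arc 7 5 1, arc 7 6 1), (arc 7 0 5, arc 7 5 2, {}), (arc 7 0 6, {}, arc 7 6 1), (arc 7 0 6, arc 7 6 1, {}), ({..<7}, {}, {}), ({..<7}, {}, {}), (arc 7 2 6, {}, arc 7 1 1), (arc 7 2 6, arc 7 1 1,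 {}), ({..<7}, {}, {}), (arc 7 3 5, {}, arc 7 1 2), (arc 7 3 5, arc 7 1 1, arc 7 2 1), (arc 7 3 5, arc 7 1 2, {}), (arc 7 3 6, {}, arc 7 2 1), (arc 7 3 6, arc 7 2 1, {}), ({..<7}, {}, {}), (arc 7 4 4, {}, arc 7 1 3), (arc 7 4 4, arc 7 1 1, arc 7 2 2), (arc 7 4 4, arc 7 1 2, arc 7 3 1), (arc 7 4 4, arc 7 1 3, {}), (arc 7 4 5, {}, arc 7 2 2), (arc 7 4 5, arc 7 2 1, arc 7 3 1), (arc 7 4 5, arc 7 2 2, {}), (arc 7 4 6, {}, arc 7 3 1), (arc 7 4 6, arc 7 3 1, {}), ({..<7}, {}, {}), (arc 7 5 3, {}, arc 7 1 4), (arc 7 5 3, arc 7 1 1, arc 7 2 3), (arc 7 5 3, arc 7 1 2, arc 7 3 2), (arc 7 5 3, arc 7 1 3, arc 7 4 1), (arc 7 5 3, arc 7 1 4, {}), (arc 7 5 4, {}, arc 7 2 3), (arc 7 5 4, arc 7 2 1, arc 7 3 2), (arc 7 5 4, arc 7 2 2, arc 7 4 1), (arc 7 5 4, arc 7 2 3, {}), (arc 7 5 5, {}, arc 7 3 2), (arc 7 5 5, arc 7 3 1, arc 7 4 1), (arc 7 5 5, arc 7 3 2, {}), (arc 7 5 6, {}, arc 7 4 1), (arc 7 5 6, arc 7 4 1, {}), ({..<7}, {}, {}), (arc 7 6 2, {}, arc 7 1 5), (arc 7 6 2, arc 7 1 1, arc 7 2 4), (arc 7 6 2, arc 7 1 2,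 arc 7 3 3), (arc 7 6 2, arc 7 1 3, arc 7 4 2), (arc 7 6 2, arc 7 1 4, arc 7 5 1), (arc 7 6 2, arc 7 1 5, {}), (arc 7 6 3, {}, arc 7 2 4), (arc 7 6 3, arc 7 2 1, arc 7 3 3), (arc 7 6 3, arc 7 2 2, arc 7 4 2), (arc 7 6 3, arc 7 2 3, arc 7 5 1), (arc 7 6 3, arc 7 2 4, {}), (arc 7 6 4, {}, arc 7 3 3), (arc 7 6 4, arc 7 3 1, arc 7 4 2), (arc 7 6 4, arc 7 3 2, arc 7 5 1), (arc 7 6 4, arc 7 3 3, {}), (arc 7 6 5, {}, arc 7 4 2), (arc 7 6 5, arc 7 4 1, arc 7 5 1), (arc 7 6 5, arc 7 4 2, {}), (arc 7 6 6, {}, arc 7 5 1), (arc 7 6 6, arc 7 5 1, {}), ({..<7}, {}, {})]"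
  unfolding SPLH_def T6_7 by (simp add: arc_full)

lemma MONO_7: "MONO 7 = [({}, arc 7 0 1), (arc 7 0 1, arc 7 0 2), (arc 7 0 2, arc 7 0 3), (arc 7 0 3, arc 7 0 4), (arc 7 0 4, arc 7 0 5), (arc 7 0 5, arc 7 0 6), (arc 7 0 6, {..<7}), ({}, arc 7 1 1), (arc 7 1 1, arc 7 1 2), (arc 7 1 2, arc 7 1 3), (arc 7 1 3, arc 7 1 4), (arc 7 1 4, arc 7 1 5), (arc 7 1 5, arc 7 1 6), (arc 7 1 6, {..<7}), ({}, arc 7 2 1), (arc 7 2 1, arc 7 2 2), (arc 7 2 2, arc 7 2 3), (arc 7 2 3, arc 7 2 4), (arc 7 2 4, arc 7 2 5), (arc 7 2 5, arc 7 2 6), (arc 7 2 6, {..<7}), ({}, arc 7 3 1), (arc 7 3 1, arc 7 3 2), (arc 7 3 2, arc 7 3 3), (arc 7 3 3, arc 7 3 4), (arc 7 3 4, arc 7 3 5), (arc 7 3 5, arc 7 3 6), (arc 7 3 6, {..<7}), ({}, arc 7 4 1), (arc 7 4 1, arc 7 4 2), (arc 7 4 2, arc 7 4 3), (arc 7 4 3, arc 7 4 4), (arc 7 4 4, arc 7 4 5), (arc 7 4 5, arc 7 4 6), (arc 7 4 6, {..<7}), ({}, arc 7 5 1), (arc 7 5 1, arc 7 5 2), (arc 7 5 2, arc 7 5 3), (arc 7 5 3, arc 7 5 4), (arc 7 5 4, arc 7 5 5), (arc 7 5 5, arc 7 5 6), (arc 7 5 6, {..<7}), ({}, arc 7 6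 1), (arc 7 6 1, arc 7 6 2), (arc 7 6 2, arc 7 6 3), (arc 7 6 3, arc 7 6 4), (arc 7 6 4, arc 7 6 5), (arc 7 6 5, arc 7 6 6), (arc 7 6 6, {..<7}), ({}, arc 7 0 1), (arc 7 1 1, arc 7 0 2), (arc 7 1 2, arc 7 0 3), (arc 7 1 3, arc 7 0 4), (arc 7 1 4, arc 7 0 5), (arc 7 1 5, arc 7 0 6), (arc 7 1 6, {..<7}), ({}, arc 7 1 1), (arc 7 2 1, arc 7 1 2), (arc 7 2 2, arc 7 1 3), (arc 7 2 3, arc 7 1 4), (arc 7 2 4, arc 7 1 5), (arc 7 2 5, arc 7 1 6), (arc 7 2 6, {..<7}), ({}, arc 7 2 1), (arc 7 3 1, arc 7 2 2), (arc 7 3 2, arc 7 2 3), (arc 7 3 3, arc 7 2 4), (arc 7 3 4, arc 7 2 5), (arc 7 3 5, arc 7 2 6), (arc 7 3 6, {..<7}), ({}, arc 7 3 1), (arc 7 4 1, arc 7 3 2), (arc 7 4 2, arc 7 3 3), (arc 7 4 3, arc 7 3 4), (arc 7 4 4, arc 7 3 5), (arc 7 4 5, arc 7 3 6), (arc 7 4 6, {..<7}), ({}, arc 7 4 1), (arc 7 5 1, arc 7 4 2), (arc 7 5 2, arc 7 4 3), (arc 7 5 3, arc 7 4 4), (arc 7 5 4, arc 7 4 5), (arc 7 5 5, arc 7 4 6), (arc 7 5 6, {..<7}), ({}, arc 7 5 1), (arc 7 6 1, arc 7 5 2), (arc 7 6 2, arc 7 5 3), (arc 7 6 3, arc 7 5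 4), (arc 7 6 4, arc 7 5 5), (arc 7 6 5, arc 7 5 6), (arc 7 6 6, {..<7}), ({}, arc 7 6 1), (arc 7 0 1, arc 7 6 2), (arc 7 0 2, arc 7 6 3), (arc 7 0 3, arc 7 6 4), (arc 7 0 4, arc 7 6 5), (arc 7 0 5, arc 7 6 6), (arc 7 0 6, {..<7})]"
  unfolding MONO_alt MP_7 by (simp add: arc_full)

lemma COMB_7: "COMB 7"
  unfolding COMB_def
  apply (intro allI impI)
  subgoal for A0 A1 A2
    using T3_all[of A0 "SPLH 7"] T3_all[of A1 "SPLH 7"] T3_all[of A2 "SPLH 7"]
    unfolding HYP_def SPL_7 SPLH_7 MONO_7 list_ex_Nil_iff list_ex_Cons_iff list_all_Nil_iff list_all_Cons_iff prod.case
    by satx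
  done

lemma T6_8: "T6 8 = [(0, 0, 0, 0, 0, 8), (0, 0, 0, 1, 1, 7), (0, 0, 0, 2, 2, 6), (0, 0, 0, 3, 3, 5), (0, 0, 0, 4, 4, 4), (0, 0, 0, 5, 5, 3), (0, 0, 0, 6, 6, 2), (0, 0, 0, 7, 7, 1), (0, 0, 0, 8, 0, 0), (0, 1, 1, 0, 1, 7), (0, 1, 1, 1, 2, 6), (0, 1, 1, 2, 3, 5), (0, 1, 1, 3, 4, 4), (0, 1, 1, 4, 5, 3), (0, 1, 1, 5, 6, 2), (0, 1, 1, 6, 7, 1), (0, 1, 1, 7, 0, 0), (0, 2, 2, 0, 2, 6), (0, 2, 2, 1, 3, 5), (0, 2, 2, 2, 4, 4), (0, 2, 2, 3, 5, 3), (0, 2, 2, 4, 6, 2), (0, 2, 2, 5, 7, 1), (0, 2, 2, 6, 0, 0), (0, 3, 3, 0, 3, 5), (0, 3, 3, 1, 4, 4), (0, 3, 3, 2, 5, 3), (0, 3, 3, 3, 6, 2), (0, 3, 3, 4, 7, 1), (0, 3, 3, 5, 0, 0), (0, 4, 4, 0, 4, 4), (0, 4, 4, 1, 5, 3), (0, 4, 4, 2, 6, 2), (0, 4, 4, 3, 7, 1), (0, 4, 4, 4, 0, 0), (0, 5, 5, 0, 5, 3), (0, 5, 5, 1, 6, 2), (0, 5, 5, 2, 7, 1), (0, 5, 5, 3, 0, 0), (0, 6, 6, 0, 6, 2), (0, 6, 6, 1, 7, 1), (0, 6, 6, 2, 0, 0), (0, 7, 7, 0, 7, 1), (0, 7,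 7, 1, 0, 0), (0, 8, 0, 0, 0, 0), (1, 0, 1, 0, 1, 8), (1, 0, 1, 1, 2, 7), (1, 0, 1, 2, 3, 6), (1, 0, 1, 3, 4, 5), (1, 0, 1, 4, 5, 4), (1, 0, 1, 5, 6, 3), (1, 0, 1, 6, 7, 2), (1, 0, 1, 7, 0, 1), (1, 0, 1, 8, 1, 0), (1, 1, 2, 0, 2, 7), (1, 1, 2, 1, 3, 6), (1, 1, 2, 2, 4, 5), (1, 1, 2, 3, 5, 4), (1, 1, 2, 4, 6, 3), (1, 1, 2, 5, 7, 2), (1, 1, 2, 6, 0, 1), (1, 1, 2, 7, 1, 0), (1, 2, 3, 0, 3, 6), (1, 2, 3, 1, 4, 5), (1, 2, 3, 2, 5, 4), (1, 2, 3, 3, 6, 3), (1, 2, 3, 4, 7, 2), (1, 2, 3, 5, 0, 1), (1, 2, 3, 6, 1, 0), (1, 3, 4, 0, 4, 5), (1, 3, 4, 1, 5, 4), (1, 3, 4, 2, 6, 3), (1, 3, 4, 3, 7, 2), (1, 3, 4, 4, 0, 1), (1, 3, 4, 5, 1, 0), (1, 4, 5, 0, 5, 4), (1, 4, 5, 1, 6, 3), (1, 4, 5, 2, 7, 2), (1, 4, 5, 3, 0, 1), (1, 4, 5, 4, 1, 0), (1, 5, 6, 0, 6, 3), (1, 5, 6, 1, 7, 2), (1, 5, 6, 2, 0, 1), (1, 5, 6, 3, 1, 0), (1, 6, 7, 0, 7, 2), (1, 6, 7, 1, 0, 1), (1, 6, 7, 2, 1, 0), (1, 7, 0, 0, 0,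 1), (1, 7, 0, 1, 1, 0), (1, 8, 1, 0, 1, 0), (2, 0, 2, 0, 2, 8), (2, 0, 2, 1, 3, 7), (2, 0, 2, 2, 4, 6), (2, 0, 2, 3, 5, 5), (2, 0, 2, 4, 6, 4), (2, 0, 2, 5, 7, 3), (2, 0, 2, 6, 0, 2), (2, 0, 2, 7, 1, 1), (2, 0, 2, 8, 2, 0), (2, 1, 3, 0, 3, 7), (2, 1, 3, 1, 4, 6), (2, 1, 3, 2, 5, 5), (2, 1, 3, 3, 6, 4), (2, 1, 3, 4, 7, 3), (2, 1, 3, 5, 0, 2), (2, 1, 3, 6, 1, 1), (2, 1, 3, 7, 2, 0), (2, 2, 4, 0, 4, 6), (2, 2, 4, 1, 5, 5), (2, 2, 4, 2, 6, 4), (2, 2, 4, 3, 7, 3), (2, 2, 4, 4, 0, 2), (2, 2, 4, 5, 1, 1), (2, 2, 4, 6, 2, 0), (2, 3, 5, 0, 5, 5), (2, 3, 5, 1, 6, 4), (2, 3, 5, 2, 7, 3), (2, 3, 5, 3, 0, 2), (2, 3, 5, 4, 1, 1), (2, 3, 5, 5, 2, 0), (2, 4, 6, 0, 6, 4), (2, 4, 6, 1, 7, 3), (2, 4, 6, 2, 0, 2), (2, 4, 6, 3, 1, 1), (2, 4, 6, 4, 2, 0), (2, 5, 7, 0, 7, 3), (2, 5, 7, 1, 0, 2), (2, 5, 7, 2, 1, 1), (2, 5, 7, 3, 2, 0), (2, 6, 0, 0, 0, 2), (2, 6, 0, 1, 1, 1), (2, 6, 0, 2, 2, 0), (2, 7,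 1, 0, 1, 1), (2, 7, 1, 1, 2, 0), (2, 8, 2, 0, 2, 0), (3, 0, 3, 0, 3, 8), (3, 0, 3, 1, 4, 7), (3, 0, 3, 2, 5, 6), (3, 0, 3, 3, 6, 5), (3, 0, 3, 4, 7, 4), (3, 0, 3, 5, 0, 3), (3, 0, 3, 6, 1, 2), (3, 0, 3, 7, 2, 1), (3, 0, 3, 8, 3, 0), (3, 1, 4, 0, 4, 7), (3, 1, 4, 1, 5, 6), (3, 1, 4, 2, 6, 5), (3, 1, 4, 3, 7, 4), (3, 1, 4, 4, 0, 3), (3, 1, 4, 5, 1, 2), (3, 1, 4, 6, 2, 1), (3, 1, 4, 7, 3, 0), (3, 2, 5, 0, 5, 6), (3, 2, 5, 1, 6, 5), (3, 2, 5, 2, 7, 4), (3, 2, 5, 3, 0, 3), (3, 2, 5, 4, 1, 2), (3, 2, 5, 5, 2, 1), (3, 2, 5, 6, 3, 0), (3, 3, 6, 0, 6, 5), (3, 3, 6, 1, 7, 4), (3, 3, 6, 2, 0, 3), (3, 3, 6, 3, 1, 2), (3, 3, 6, 4, 2, 1), (3, 3, 6, 5, 3, 0), (3, 4, 7, 0, 7, 4), (3, 4, 7, 1, 0, 3), (3, 4, 7, 2, 1, 2), (3, 4, 7, 3, 2, 1), (3, 4, 7, 4, 3, 0), (3, 5, 0, 0, 0, 3), (3, 5, 0, 1, 1, 2), (3, 5, 0, 2, 2, 1), (3, 5, 0, 3, 3, 0), (3, 6, 1, 0, 1, 2), (3, 6, 1, 1, 2, 1), (3, 6, 1, 2, 3,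 0), (3, 7, 2, 0, 2, 1), (3, 7, 2, 1, 3, 0), (3, 8, 3, 0, 3, 0), (4, 0, 4, 0, 4, 8), (4, 0, 4, 1, 5, 7), (4, 0, 4, 2, 6, 6), (4, 0, 4, 3, 7, 5), (4, 0, 4, 4, 0, 4), (4, 0, 4, 5, 1, 3), (4, 0, 4, 6, 2, 2), (4, 0, 4, 7, 3, 1), (4, 0, 4, 8, 4, 0), (4, 1, 5, 0, 5, 7), (4, 1, 5, 1, 6, 6), (4, 1, 5, 2, 7, 5), (4, 1, 5, 3, 0, 4), (4, 1, 5, 4, 1, 3), (4, 1, 5, 5, 2, 2), (4, 1, 5, 6, 3, 1), (4, 1, 5, 7, 4, 0), (4, 2, 6, 0, 6, 6), (4, 2, 6, 1, 7, 5), (4, 2, 6, 2, 0, 4), (4, 2, 6, 3, 1, 3), (4, 2, 6, 4, 2, 2), (4, 2, 6, 5, 3, 1), (4, 2, 6, 6, 4, 0), (4, 3, 7, 0, 7, 5), (4, 3, 7, 1, 0, 4), (4, 3, 7, 2, 1, 3), (4, 3, 7, 3, 2, 2), (4, 3, 7, 4, 3, 1), (4, 3, 7, 5, 4, 0), (4, 4, 0, 0, 0, 4), (4, 4, 0, 1, 1, 3), (4, 4, 0, 2, 2, 2), (4, 4, 0, 3, 3, 1), (4, 4, 0, 4, 4, 0), (4, 5, 1, 0, 1, 3), (4, 5, 1, 1, 2, 2), (4, 5, 1, 2, 3, 1), (4, 5, 1, 3, 4, 0), (4, 6, 2, 0, 2, 2), (4, 6, 2, 1, 3, 1), (4, 6,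 2, 2, 4, 0), (4, 7, 3, 0, 3, 1), (4, 7, 3, 1, 4, 0), (4, 8, 4, 0, 4, 0), (5, 0, 5, 0, 5, 8), (5, 0, 5, 1, 6, 7), (5, 0, 5, 2, 7, 6), (5, 0, 5, 3, 0, 5), (5, 0, 5, 4, 1, 4), (5, 0, 5, 5, 2, 3), (5, 0, 5, 6, 3, 2), (5, 0, 5, 7, 4, 1), (5, 0, 5, 8, 5, 0), (5, 1, 6, 0, 6, 7), (5, 1, 6, 1, 7, 6), (5, 1, 6, 2, 0, 5), (5, 1, 6, 3, 1, 4), (5, 1, 6, 4, 2, 3), (5, 1, 6, 5, 3, 2), (5, 1, 6, 6, 4, 1), (5, 1, 6, 7, 5, 0), (5, 2, 7, 0, 7, 6), (5, 2, 7, 1, 0, 5), (5, 2, 7, 2, 1, 4), (5, 2, 7, 3, 2, 3), (5, 2, 7, 4, 3, 2), (5, 2, 7, 5, 4, 1), (5, 2, 7, 6, 5, 0), (5, 3, 0, 0, 0, 5), (5, 3, 0, 1, 1, 4), (5, 3, 0, 2, 2, 3), (5, 3, 0, 3, 3, 2), (5, 3, 0, 4, 4, 1), (5, 3, 0, 5, 5, 0), (5, 4, 1, 0, 1, 4), (5, 4, 1, 1, 2, 3), (5, 4, 1, 2, 3, 2), (5, 4, 1, 3, 4, 1), (5, 4, 1, 4, 5, 0), (5, 5, 2, 0, 2, 3), (5, 5, 2, 1, 3, 2), (5, 5, 2, 2, 4, 1), (5, 5, 2, 3, 5, 0), (5, 6, 3, 0, 3, 2), (5, 6, 3, 1, 4,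 1), (5, 6, 3, 2, 5, 0), (5, 7, 4, 0, 4, 1), (5, 7, 4, 1, 5, 0), (5, 8, 5, 0, 5, 0), (6, 0, 6, 0, 6, 8), (6, 0, 6, 1, 7, 7), (6, 0, 6, 2, 0, 6), (6, 0, 6, 3, 1, 5), (6, 0, 6, 4, 2, 4), (6, 0, 6, 5, 3, 3), (6, 0, 6, 6, 4, 2), (6, 0, 6, 7, 5, 1), (6, 0, 6, 8, 6, 0), (6, 1, 7, 0, 7, 7), (6, 1, 7, 1, 0, 6), (6, 1, 7, 2, 1, 5), (6, 1, 7, 3, 2, 4), (6, 1, 7, 4, 3, 3), (6, 1, 7, 5, 4, 2), (6, 1, 7, 6, 5, 1), (6, 1, 7, 7, 6, 0), (6, 2, 0, 0, 0, 6), (6, 2, 0, 1, 1, 5), (6, 2, 0, 2, 2, 4), (6, 2, 0, 3, 3, 3), (6, 2, 0, 4, 4, 2), (6, 2, 0, 5, 5, 1), (6, 2, 0, 6, 6, 0), (6, 3, 1, 0, 1, 5), (6, 3, 1, 1, 2, 4), (6, 3, 1, 2, 3, 3), (6, 3, 1, 3, 4, 2), (6, 3, 1, 4, 5, 1), (6, 3, 1, 5, 6, 0), (6, 4, 2, 0, 2, 4), (6, 4, 2, 1, 3, 3), (6, 4, 2, 2, 4, 2), (6, 4, 2, 3, 5, 1), (6, 4, 2, 4, 6, 0), (6, 5, 3, 0, 3, 3), (6, 5, 3, 1, 4, 2), (6, 5, 3, 2, 5, 1), (6, 5, 3, 3, 6, 0), (6, 6, 4, 0, 4, 2), (6, 6,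 4, 1, 5, 1), (6, 6, 4, 2, 6, 0), (6, 7, 5, 0, 5, 1), (6, 7, 5, 1, 6, 0), (6, 8, 6, 0, 6, 0), (7, 0, 7, 0, 7, 8), (7, 0, 7, 1, 0, 7), (7, 0, 7, 2, 1, 6), (7, 0, 7, 3, 2, 5), (7, 0, 7, 4, 3, 4), (7, 0, 7, 5, 4, 3), (7, 0, 7, 6, 5, 2), (7, 0, 7, 7, 6, 1), (7, 0, 7, 8, 7, 0), (7, 1, 0, 0, 0, 7), (7, 1, 0, 1, 1, 6), (7, 1, 0, 2, 2, 5), (7, 1, 0, 3, 3, 4), (7, 1, 0, 4, 4, 3), (7, 1, 0, 5, 5, 2), (7, 1, 0, 6, 6, 1), (7, 1, 0, 7, 7, 0), (7, 2, 1, 0, 1, 6), (7, 2, 1, 1, 2, 5), (7, 2, 1, 2, 3, 4), (7, 2, 1, 3, 4, 3), (7, 2, 1, 4, 5, 2), (7, 2, 1, 5, 6, 1), (7, 2, 1, 6, 7, 0), (7, 3, 2, 0, 2, 5), (7, 3, 2, 1, 3, 4), (7, 3, 2, 2, 4, 3), (7, 3, 2, 3, 5, 2), (7, 3, 2, 4, 6, 1), (7, 3, 2, 5, 7, 0), (7, 4, 3, 0, 3, 4), (7, 4, 3, 1, 4, 3), (7, 4, 3, 2, 5, 2), (7, 4, 3, 3, 6, 1), (7, 4, 3, 4, 7, 0), (7, 5, 4, 0, 4, 3), (7, 5, 4, 1, 5, 2), (7, 5, 4, 2, 6, 1), (7, 5, 4, 3, 7, 0), (7, 6, 5, 0, 5,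 2), (7, 6, 5, 1, 6, 1), (7, 6, 5, 2, 7, 0), (7, 7, 6, 0, 6, 1), (7, 7, 6, 1, 7, 0), (7, 8, 7, 0, 7, 0)]"
  by code_simp

lemma MP_8: "MP 8 = [(0, 0, 1, 1), (0, 1, 1, 2), (0, 2, 1, 3), (0, 3, 1, 4), (0, 4, 1, 5), (0, 5, 1, 6), (0, 6, 1, 7), (0, 7, 1, 8), (1, 0, 2, 1), (1, 1, 2, 2), (1, 2, 2, 3), (1, 3, 2, 4), (1, 4, 2, 5), (1, 5, 2, 6), (1, 6, 2, 7), (1, 7, 2, 8), (2, 0, 3, 1), (2, 1, 3, 2), (2, 2, 3, 3), (2, 3, 3, 4), (2, 4, 3, 5), (2, 5, 3, 6), (2, 6, 3, 7), (2, 7, 3, 8), (3, 0, 4, 1), (3, 1, 4, 2), (3, 2, 4, 3), (3, 3, 4, 4), (3, 4, 4, 5), (3, 5, 4, 6), (3, 6, 4, 7), (3, 7, 4, 8), (4, 0, 5, 1), (4, 1, 5, 2), (4, 2, 5, 3), (4, 3, 5, 4), (4, 4, 5, 5), (4, 5, 5, 6), (4, 6, 5, 7), (4, 7, 5, 8), (5, 0, 6, 1), (5, 1, 6, 2), (5, 2, 6, 3), (5, 3, 6, 4), (5, 4, 6, 5), (5, 5, 6, 6), (5, 6, 6, 7), (5, 7, 6, 8), (6, 0, 7, 1), (6, 1, 7, 2), (6, 2, 7, 3), (6, 3, 7, 4), (6, 4, 7, 5), (6, 5, 7, 6), (6, 6, 7, 7), (6, 7, 7, 8), (7, 0, 0,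 1), (7, 1, 0, 2), (7, 2, 0, 3), (7, 3, 0, 4), (7, 4, 0, 5), (7, 5, 0, 6), (7, 6, 0, 7), (7, 7, 0, 8)]"
  by code_simp

lemma SPL_8: "SPL 8 = [({}, {}, {..<8}), ({}, arc 8 0 1, arc 8 1 7), ({}, arc 8 0 2, arc 8 2 6), ({}, arc 8 0 3, arc 8 3 5), ({}, arc 8 0 4, arc 8 4 4), ({}, arc 8 0 5, arc 8 5 3), ({}, arc 8 0 6, arc 8 6 2), ({}, arc 8 0 7, arc 8 7 1), ({}, {..<8}, {}), (arc 8 0 1, {}, arc 8 1 7), (arc 8 0 1, arc 8 1 1, arc 8 2 6), (arc 8 0 1, arc 8 1 2, arc 8 3 5), (arc 8 0 1, arc 8 1 3, arc 8 4 4), (arc 8 0 1, arc 8 1 4, arc 8 5 3), (arc 8 0 1, arc 8 1 5, arc 8 6 2), (arc 8 0 1, arc 8 1 6, arc 8 7 1), (arc 8 0 1, arc 8 1 7, {}), (arc 8 0 2, {}, arc 8 2 6), (arc 8 0 2, arc 8 2 1, arc 8 3 5), (arc 8 0 2, arc 8 2 2, arc 8 4 4), (arc 8 0 2, arc 8 2 3, arc 8 5 3), (arc 8 0 2, arc 8 2 4, arc 8 6 2), (arc 8 0 2, arc 8 2 5, arc 8 7 1), (arc 8 0 2, arc 8 2 6, {}), (arc 8 0 3, {}, arc 8 3 5), (arc 8 0 3, arc 8 3 1, arc 8 4 4), (arc 8 0 3, arc 8 3 2, arc 8 5 3), (arc 8 0 3, arc 8 3 3, arc 8 6 2), (arc 8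 0 3, arc 8 3 4, arc 8 7 1), (arc 8 0 3, arc 8 3 5, {}), (arc 8 0 4, {}, arc 8 4 4), (arc 8 0 4, arc 8 4 1, arc 8 5 3), (arc 8 0 4, arc 8 4 2, arc 8 6 2), (arc 8 0 4, arc 8 4 3, arc 8 7 1), (arc 8 0 4, arc 8 4 4, {}), (arc 8 0 5, {}, arc 8 5 3), (arc 8 0 5, arc 8 5 1, arc 8 6 2), (arc 8 0 5, arc 8 5 2, arc 8 7 1), (arc 8 0 5, arc 8 5 3, {}), (arc 8 0 6, {}, arc 8 6 2), (arc 8 0 6, arc 8 6 1, arc 8 7 1), (arc 8 0 6, arc 8 6 2, {}), (arc 8 0 7, {}, arc 8 7 1), (arc 8 0 7, arc 8 7 1, {}), ({..<8}, {}, {}), ({}, {}, {..<8}), ({}, arc 8 1 1, arc 8 2 7), ({}, arc 8 1 2, arc 8 3 6), ({}, arc 8 1 3, arc 8 4 5), ({}, arc 8 1 4, arc 8 5 4), ({}, arc 8 1 5, arc 8 6 3), ({}, arc 8 1 6, arc 8 7 2), ({}, arc 8 1 7, arc 8 0 1), ({}, {..<8}, {}), (arc 8 1 1, {}, arc 8 2 7), (arc 8 1 1, arc 8 2 1, arc 8 3 6), (arc 8 1 1, arc 8 2 2, arc 8 4 5), (arc 8 1 1, arc 8 2 3, arc 8 5 4), (arc 8 1 1, arc 8 2 4, arc 8 6 3), (arc 8 1 1, arc 8 2 5, arc 8 7 2), (arc 8 1 1, arc 8 2 6, arc 8 0 1), (arc 8 1 1, arc 8 2 7, {}), (arc 8 1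 2, {}, arc 8 3 6), (arc 8 1 2, arc 8 3 1, arc 8 4 5), (arc 8 1 2, arc 8 3 2, arc 8 5 4), (arc 8 1 2, arc 8 3 3, arc 8 6 3), (arc 8 1 2, arc 8 3 4, arc 8 7 2), (arc 8 1 2, arc 8 3 5, arc 8 0 1), (arc 8 1 2, arc 8 3 6, {}), (arc 8 1 3, {}, arc 8 4 5), (arc 8 1 3, arc 8 4 1, arc 8 5 4), (arc 8 1 3, arc 8 4 2, arc 8 6 3), (arc 8 1 3, arc 8 4 3, arc 8 7 2), (arc 8 1 3, arc 8 4 4, arc 8 0 1), (arc 8 1 3, arc 8 4 5, {}), (arc 8 1 4, {}, arc 8 5 4), (arc 8 1 4, arc 8 5 1, arc 8 6 3), (arc 8 1 4, arc 8 5 2, arc 8 7 2), (arc 8 1 4, arc 8 5 3, arc 8 0 1), (arc 8 1 4, arc 8 5 4, {}), (arc 8 1 5, {}, arc 8 6 3), (arc 8 1 5, arc 8 6 1, arc 8 7 2), (arc 8 1 5, arc 8 6 2, arc 8 0 1), (arc 8 1 5, arc 8 6 3, {}), (arc 8 1 6, {}, arc 8 7 2), (arc 8 1 6, arc 8 7 1, arc 8 0 1), (arc 8 1 6, arc 8 7 2, {}), (arc 8 1 7, {}, arc 8 0 1), (arc 8 1 7, arc 8 0 1, {}), ({..<8}, {}, {}), ({}, {}, {..<8}), ({}, arc 8 2 1, arc 8 3 7), ({}, arc 8 2 2, arc 8 4 6), ({}, arc 8 2 3, arc 8 5 5), ({}, arc 8 2 4, arc 8 6 4), ({}, arc 8 2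 5, arc 8 7 3), ({}, arc 8 2 6, arc 8 0 2), ({}, arc 8 2 7, arc 8 1 1), ({}, {..<8}, {}), (arc 8 2 1, {}, arc 8 3 7), (arc 8 2 1, arc 8 3 1, arc 8 4 6), (arc 8 2 1, arc 8 3 2, arc 8 5 5), (arc 8 2 1, arc 8 3 3, arc 8 6 4), (arc 8 2 1, arc 8 3 4, arc 8 7 3), (arc 8 2 1, arc 8 3 5, arc 8 0 2), (arc 8 2 1, arc 8 3 6, arc 8 1 1), (arc 8 2 1, arc 8 3 7, {}), (arc 8 2 2, {}, arc 8 4 6), (arc 8 2 2, arc 8 4 1, arc 8 5 5), (arc 8 2 2, arc 8 4 2, arc 8 6 4), (arc 8 2 2, arc 8 4 3, arc 8 7 3), (arc 8 2 2, arc 8 4 4, arc 8 0 2), (arc 8 2 2, arc 8 4 5, arc 8 1 1), (arc 8 2 2, arc 8 4 6, {}), (arc 8 2 3, {}, arc 8 5 5), (arc 8 2 3, arc 8 5 1, arc 8 6 4), (arc 8 2 3, arc 8 5 2, arc 8 7 3), (arc 8 2 3, arc 8 5 3, arc 8 0 2), (arc 8 2 3, arc 8 5 4, arc 8 1 1), (arc 8 2 3, arc 8 5 5, {}), (arc 8 2 4, {}, arc 8 6 4), (arc 8 2 4, arc 8 6 1, arc 8 7 3), (arc 8 2 4, arc 8 6 2, arc 8 0 2), (arc 8 2 4, arc 8 6 3, arc 8 1 1), (arc 8 2 4, arc 8 6 4, {}), (arc 8 2 5, {}, arc 8 7 3), (arc 8 2 5, arc 8 7 1, arc 8 0 2), (arc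 8 2 5, arc 8 7 2, arc 8 1 1), (arc 8 2 5, arc 8 7 3, {}), (arc 8 2 6, {}, arc 8 0 2), (arc 8 2 6, arc 8 0 1, arc 8 1 1), (arc 8 2 6, arc 8 0 2, {}), (arc 8 2 7, {}, arc 8 1 1), (arc 8 2 7, arc 8 1 1, {}), ({..<8}, {}, {}), ({}, {}, {..<8}), ({}, arc 8 3 1, arc 8 4 7), ({}, arc 8 3 2, arc 8 5 6), ({}, arc 8 3 3, arc 8 6 5), ({}, arc 8 3 4, arc 8 7 4), ({}, arc 8 3 5, arc 8 0 3), ({}, arc 8 3 6, arc 8 1 2), ({}, arc 8 3 7, arc 8 2 1), ({}, {..<8}, {}), (arc 8 3 1, {}, arc 8 4 7), (arc 8 3 1, arc 8 4 1, arc 8 5 6), (arc 8 3 1, arc 8 4 2, arc 8 6 5), (arc 8 3 1, arc 8 4 3, arc 8 7 4), (arc 8 3 1, arc 8 4 4, arc 8 0 3), (arc 8 3 1, arc 8 4 5, arc 8 1 2), (arc 8 3 1, arc 8 4 6, arc 8 2 1), (arc 8 3 1, arc 8 4 7, {}), (arc 8 3 2, {}, arc 8 5 6), (arc 8 3 2, arc 8 5 1, arc 8 6 5), (arc 8 3 2, arc 8 5 2, arc 8 7 4), (arc 8 3 2, arc 8 5 3, arc 8 0 3), (arc 8 3 2, arc 8 5 4, arc 8 1 2), (arc 8 3 2, arc 8 5 5, arc 8 2 1), (arc 8 3 2, arc 8 5 6, {}), (arc 8 3 3, {}, arc 8 6 5), (arc 8 3 3, arc 8 6 1, arc 8 7 4),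 (arc 8 3 3, arc 8 6 2, arc 8 0 3), (arc 8 3 3, arc 8 6 3, arc 8 1 2), (arc 8 3 3, arc 8 6 4, arc 8 2 1), (arc 8 3 3, arc 8 6 5, {}), (arc 8 3 4, {}, arc 8 7 4), (arc 8 3 4, arc 8 7 1, arc 8 0 3), (arc 8 3 4, arc 8 7 2, arc 8 1 2), (arc 8 3 4, arc 8 7 3, arc 8 2 1), (arc 8 3 4, arc 8 7 4, {}), (arc 8 3 5, {}, arc 8 0 3), (arc 8 3 5, arc 8 0 1, arc 8 1 2), (arc 8 3 5, arc 8 0 2, arc 8 2 1), (arc 8 3 5, arc 8 0 3, {}), (arc 8 3 6, {}, arc 8 1 2), (arc 8 3 6, arc 8 1 1, arc 8 2 1), (arc 8 3 6, arc 8 1 2, {}), (arc 8 3 7, {}, arc 8 2 1), (arc 8 3 7, arc 8 2 1, {}), ({..<8}, {}, {}), ({}, {}, {..<8}), ({}, arc 8 4 1, arc 8 5 7), ({}, arc 8 4 2, arc 8 6 6), ({}, arc 8 4 3, arc 8 7 5), ({}, arc 8 4 4, arc 8 0 4), ({}, arc 8 4 5, arc 8 1 3), ({}, arc 8 4 6, arc 8 2 2), ({}, arc 8 4 7, arc 8 3 1), ({}, {..<8}, {}), (arc 8 4 1, {}, arc 8 5 7), (arc 8 4 1, arc 8 5 1, arc 8 6 6), (arc 8 4 1, arc 8 5 2, arc 8 7 5), (arc 8 4 1, arc 8 5 3, arc 8 0 4), (arc 8 4 1, arc 8 5 4, arc 8 1 3), (arc 8 4 1, arc 8 5 5, arc 8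 2 2), (arc 8 4 1, arc 8 5 6, arc 8 3 1), (arc 8 4 1, arc 8 5 7, {}), (arc 8 4 2, {}, arc 8 6 6), (arc 8 4 2, arc 8 6 1, arc 8 7 5), (arc 8 4 2, arc 8 6 2, arc 8 0 4), (arc 8 4 2, arc 8 6 3, arc 8 1 3), (arc 8 4 2, arc 8 6 4, arc 8 2 2), (arc 8 4 2, arc 8 6 5, arc 8 3 1), (arc 8 4 2, arc 8 6 6, {}), (arc 8 4 3, {}, arc 8 7 5), (arc 8 4 3, arc 8 7 1, arc 8 0 4), (arc 8 4 3, arc 8 7 2, arc 8 1 3), (arc 8 4 3, arc 8 7 3, arc 8 2 2), (arc 8 4 3, arc 8 7 4, arc 8 3 1), (arc 8 4 3, arc 8 7 5, {}), (arc 8 4 4, {}, arc 8 0 4), (arc 8 4 4, arc 8 0 1, arc 8 1 3), (arc 8 4 4, arc 8 0 2, arc 8 2 2), (arc 8 4 4, arc 8 0 3, arc 8 3 1), (arc 8 4 4, arc 8 0 4, {}), (arc 8 4 5, {}, arc 8 1 3), (arc 8 4 5, arc 8 1 1, arc 8 2 2), (arc 8 4 5, arc 8 1 2, arc 8 3 1), (arc 8 4 5, arc 8 1 3, {}), (arc 8 4 6, {}, arc 8 2 2), (arc 8 4 6, arc 8 2 1, arc 8 3 1), (arc 8 4 6, arc 8 2 2, {}), (arc 8 4 7, {}, arc 8 3 1), (arc 8 4 7, arc 8 3 1, {}), ({..<8}, {}, {}), ({}, {}, {..<8}), ({}, arc 8 5 1, arc 8 6 7), ({}, arc 8 5 2,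 arc 8 7 6), ({}, arc 8 5 3, arc 8 0 5), ({}, arc 8 5 4, arc 8 1 4), ({}, arc 8 5 5, arc 8 2 3), ({}, arc 8 5 6, arc 8 3 2), ({}, arc 8 5 7, arc 8 4 1), ({}, {..<8}, {}), (arc 8 5 1, {}, arc 8 6 7), (arc 8 5 1, arc 8 6 1, arc 8 7 6), (arc 8 5 1, arc 8 6 2, arc 8 0 5), (arc 8 5 1, arc 8 6 3, arc 8 1 4), (arc 8 5 1, arc 8 6 4, arc 8 2 3), (arc 8 5 1, arc 8 6 5, arc 8 3 2), (arc 8 5 1, arc 8 6 6, arc 8 4 1), (arc 8 5 1, arc 8 6 7, {}), (arc 8 5 2, {}, arc 8 7 6), (arc 8 5 2, arc 8 7 1, arc 8 0 5), (arc 8 5 2, arc 8 7 2, arc 8 1 4), (arc 8 5 2, arc 8 7 3, arc 8 2 3), (arc 8 5 2, arc 8 7 4, arc 8 3 2), (arc 8 5 2, arc 8 7 5, arc 8 4 1), (arc 8 5 2, arc 8 7 6, {}), (arc 8 5 3, {}, arc 8 0 5), (arc 8 5 3, arc 8 0 1, arc 8 1 4), (arc 8 5 3, arc 8 0 2, arc 8 2 3), (arc 8 5 3, arc 8 0 3, arc 8 3 2), (arc 8 5 3, arc 8 0 4, arc 8 4 1), (arc 8 5 3, arc 8 0 5, {}), (arc 8 5 4, {}, arc 8 1 4), (arc 8 5 4, arc 8 1 1, arc 8 2 3), (arc 8 5 4, arc 8 1 2, arc 8 3 2), (arc 8 5 4, arc 8 1 3, arc 8 4 1), (arc 8 5 4,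 arc 8 1 4, {}), (arc 8 5 5, {}, arc 8 2 3), (arc 8 5 5, arc 8 2 1, arc 8 3 2), (arc 8 5 5, arc 8 2 2, arc 8 4 1), (arc 8 5 5, arc 8 2 3, {}), (arc 8 5 6, {}, arc 8 3 2), (arc 8 5 6, arc 8 3 1, arc 8 4 1), (arc 8 5 6, arc 8 3 2, {}), (arc 8 5 7, {}, arc 8 4 1), (arc 8 5 7, arc 8 4 1, {}), ({..<8}, {}, {}), ({}, {}, {..<8}), ({}, arc 8 6 1, arc 8 7 7), ({}, arc 8 6 2, arc 8 0 6), ({}, arc 8 6 3, arc 8 1 5), ({}, arc 8 6 4, arc 8 2 4), ({}, arc 8 6 5, arc 8 3 3), ({}, arc 8 6 6, arc 8 4 2), ({}, arc 8 6 7, arc 8 5 1), ({}, {..<8}, {}), (arc 8 6 1, {}, arc 8 7 7), (arc 8 6 1, arc 8 7 1, arc 8 0 6), (arc 8 6 1, arc 8 7 2, arc 8 1 5), (arc 8 6 1, arc 8 7 3, arc 8 2 4), (arc 8 6 1, arc 8 7 4, arc 8 3 3), (arc 8 6 1, arc 8 7 5, arc 8 4 2), (arc 8 6 1, arc 8 7 6, arc 8 5 1), (arc 8 6 1, arc 8 7 7, {}), (arc 8 6 2, {}, arc 8 0 6), (arc 8 6 2, arc 8 0 1, arc 8 1 5), (arc 8 6 2, arc 8 0 2, arc 8 2 4), (arc 8 6 2, arc 8 0 3, arc 8 3 3), (arc 8 6 2, arc 8 0 4, arc 8 4 2), (arc 8 6 2, arc 8 0 5, arc 8 5 1), (arc 8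 6 2, arc 8 0 6, {}), (arc 8 6 3, {}, arc 8 1 5), (arc 8 6 3, arc 8 1 1, arc 8 2 4), (arc 8 6 3, arc 8 1 2, arc 8 3 3), (arc 8 6 3, arc 8 1 3, arc 8 4 2), (arc 8 6 3, arc 8 1 4, arc 8 5 1), (arc 8 6 3, arc 8 1 5, {}), (arc 8 6 4, {}, arc 8 2 4), (arc 8 6 4, arc 8 2 1, arc 8 3 3), (arc 8 6 4, arc 8 2 2, arc 8 4 2), (arc 8 6 4, arc 8 2 3, arc 8 5 1), (arc 8 6 4, arc 8 2 4, {}), (arc 8 6 5, {}, arc 8 3 3), (arc 8 6 5, arc 8 3 1, arc 8 4 2), (arc 8 6 5, arc 8 3 2, arc 8 5 1), (arc 8 6 5, arc 8 3 3, {}), (arc 8 6 6, {}, arc 8 4 2), (arc 8 6 6, arc 8 4 1, arc 8 5 1), (arc 8 6 6, arc 8 4 2, {}), (arc 8 6 7, {}, arc 8 5 1), (arc 8 6 7, arc 8 5 1, {}), ({..<8}, {}, {}), ({}, {}, {..<8}), ({}, arc 8 7 1, arc 8 0 7), ({}, arc 8 7 2, arc 8 1 6), ({}, arc 8 7 3, arc 8 2 5), ({}, arc 8 7 4, arc 8 3 4), ({}, arc 8 7 5, arc 8 4 3), ({}, arc 8 7 6, arc 8 5 2), ({}, arc 8 7 7, arc 8 6 1), ({}, {..<8}, {}), (arc 8 7 1, {}, arc 8 0 7), (arc 8 7 1, arc 8 0 1, arc 8 1 6), (arc 8 7 1, arc 8 0 2, arc 8 2 5), (arc 8 7 1, arc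 8 0 3, arc 8 3 4), (arc 8 7 1, arc 8 0 4, arc 8 4 3), (arc 8 7 1, arc 8 0 5, arc 8 5 2), (arc 8 7 1, arc 8 0 6, arc 8 6 1), (arc 8 7 1, arc 8 0 7, {}), (arc 8 7 2, {}, arc 8 1 6), (arc 8 7 2, arc 8 1 1, arc 8 2 5), (arc 8 7 2, arc 8 1 2, arc 8 3 4), (arc 8 7 2, arc 8 1 3, arc 8 4 3), (arc 8 7 2, arc 8 1 4, arc 8 5 2), (arc 8 7 2, arc 8 1 5, arc 8 6 1), (arc 8 7 2, arc 8 1 6, {}), (arc 8 7 3, {}, arc 8 2 5), (arc 8 7 3, arc 8 2 1, arc 8 3 4), (arc 8 7 3, arc 8 2 2, arc 8 4 3), (arc 8 7 3, arc 8 2 3, arc 8 5 2), (arc 8 7 3, arc 8 2 4, arc 8 6 1), (arc 8 7 3, arc 8 2 5, {}), (arc 8 7 4, {}, arc 8 3 4), (arc 8 7 4, arc 8 3 1, arc 8 4 3), (arc 8 7 4, arc 8 3 2, arc 8 5 2), (arc 8 7 4, arc 8 3 3, arc 8 6 1), (arc 8 7 4, arc 8 3 4, {}), (arc 8 7 5, {}, arc 8 4 3), (arc 8 7 5, arc 8 4 1, arc 8 5 2), (arc 8 7 5, arc 8 4 2, arc 8 6 1), (arc 8 7 5, arc 8 4 3, {}), (arc 8 7 6, {}, arc 8 5 2), (arc 8 7 6, arc 8 5 1, arc 8 6 1), (arc 8 7 6, arc 8 5 2, {}), (arc 8 7 7, {}, arc 8 6 1), (arc 8 7 7, arc 8 6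 1, {}), ({..<8}, {}, {})]"
  unfolding SPL_alt T6_8 by (simp add: arc_full)

lemma SPLH_8: "SPLH 8 = [(arc 8 0 1, {}, arc 8 1 7), (arc 8 0 1, arc 8 1 1, arc 8 2 6), (arc 8 0 1, arc 8 1 2, arc 8 3 5), (arc 8 0 1, arc 8 1 3, arc 8 4 4), (arc 8 0 1, arc 8 1 4, arc 8 5 3), (arc 8 0 1, arc 8 1 5, arc 8 6 2), (arc 8 0 1, arc 8 1 6, arc 8 7 1), (arc 8 0 1, arc 8 1 7, {}), (arc 8 0 2, {}, arc 8 2 6), (arc 8 0 2, arc 8 2 1, arc 8 3 5), (arc 8 0 2, arc 8 2 2, arc 8 4 4), (arc 8 0 2, arc 8 2 3, arc 8 5 3), (arc 8 0 2, arc 8 2 4, arc 8 6 2), (arc 8 0 2, arc 8 2 5, arc 8 7 1), (arc 8 0 2, arc 8 2 6, {}), (arc 8 0 3, {}, arc 8 3 5), (arc 8 0 3, arc 8 3 1, arc 8 4 4), (arc 8 0 3, arc 8 3 2, arc 8 5 3), (arc 8 0 3, arc 8 3 3, arc 8 6 2), (arc 8 0 3, arc 8 3 4, arc 8 7 1), (arc 8 0 3, arc 8 3 5, {}), (arc 8 0 4, {}, arc 8 4 4), (arc 8 0 4, arc 8 4 1, arc 8 5 3), (arc 8 0 4, arc 8 4 2, arc 8 6 2), (arc 8 0 4, arc 8 4 3, arc 8 7 1), (arc 8 0 4, arc 8 4 4, {}), (arc 8 0 5, {}, arc 8 5 3), (arc 8 0 5, arc 8 5 1, arc 8 6 2), (arc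 8 0 5, arc 8 5 2, arc 8 7 1), (arc 8 0 5, arc 8 5 3, {}), (arc 8 0 6, {}, arc 8 6 2), (arc 8 0 6, arc 8 6 1, arc 8 7 1), (arc 8 0 6, arc 8 6 2, {}), (arc 8 0 7, {}, arc 8 7 1), (arc 8 0 7, arc 8 7 1, {}), ({..<8}, {}, {}), ({..<8}, {}, {}), (arc 8 2 7, {}, arc 8 1 1), (arc 8 2 7, arc 8 1 1, {}), ({..<8}, {}, {}), (arc 8 3 6, {}, arc 8 1 2), (arc 8 3 6, arc 8 1 1, arc 8 2 1), (arc 8 3 6, arc 8 1 2, {}), (arc 8 3 7, {}, arc 8 2 1), (arc 8 3 7, arc 8 2 1, {}), ({..<8}, {}, {}), (arc 8 4 5, {}, arc 8 1 3), (arc 8 4 5, arc 8 1 1, arc 8 2 2), (arc 8 4 5, arc 8 1 2, arc 8 3 1), (arc 8 4 5, arc 8 1 3, {}), (arc 8 4 6, {}, arc 8 2 2), (arc 8 4 6, arc 8 2 1, arc 8 3 1), (arc 8 4 6, arc 8 2 2, {}), (arc 8 4 7, {}, arc 8 3 1), (arc 8 4 7, arc 8 3 1, {}), ({..<8}, {}, {}), (arc 8 5 4, {}, arc 8 1 4), (arc 8 5 4, arc 8 1 1, arc 8 2 3), (arc 8 5 4, arc 8 1 2, arc 8 3 2), (arc 8 5 4, arc 8 1 3, arc 8 4 1), (arc 8 5 4, arc 8 1 4, {}), (arc 8 5 5, {}, arc 8 2 3), (arc 8 5 5, arc 8 2 1, arc 8 3 2), (arc 8 5 5, arc 8 2 2,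 arc 8 4 1), (arc 8 5 5, arc 8 2 3, {}), (arc 8 5 6, {}, arc 8 3 2), (arc 8 5 6, arc 8 3 1, arc 8 4 1), (arc 8 5 6, arc 8 3 2, {}), (arc 8 5 7, {}, arc 8 4 1), (arc 8 5 7, arc 8 4 1, {}), ({..<8}, {}, {}), (arc 8 6 3, {}, arc 8 1 5), (arc 8 6 3, arc 8 1 1, arc 8 2 4), (arc 8 6 3, arc 8 1 2, arc 8 3 3), (arc 8 6 3, arc 8 1 3, arc 8 4 2), (arc 8 6 3, arc 8 1 4, arc 8 5 1), (arc 8 6 3, arc 8 1 5, {}), (arc 8 6 4, {}, arc 8 2 4), (arc 8 6 4, arc 8 2 1, arc 8 3 3), (arc 8 6 4, arc 8 2 2, arc 8 4 2), (arc 8 6 4, arc 8 2 3, arc 8 5 1), (arc 8 6 4, arc 8 2 4, {}), (arc 8 6 5, {}, arc 8 3 3), (arc 8 6 5, arc 8 3 1, arc 8 4 2), (arc 8 6 5, arc 8 3 2, arc 8 5 1), (arc 8 6 5, arc 8 3 3, {}), (arc 8 6 6, {}, arc 8 4 2), (arc 8 6 6, arc 8 4 1, arc 8 5 1), (arc 8 6 6, arc 8 4 2, {}), (arc 8 6 7, {}, arc 8 5 1), (arc 8 6 7, arc 8 5 1, {}), ({..<8}, {}, {}), (arc 8 7 2, {}, arc 8 1 6), (arc 8 7 2, arc 8 1 1, arc 8 2 5), (arc 8 7 2, arc 8 1 2, arc 8 3 4), (arc 8 7 2, arc 8 1 3, arc 8 4 3), (arc 8 7 2, arc 8 1 4, arc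 8 5 2), (arc 8 7 2, arc 8 1 5, arc 8 6 1), (arc 8 7 2, arc 8 1 6, {}), (arc 8 7 3, {}, arc 8 2 5), (arc 8 7 3, arc 8 2 1, arc 8 3 4), (arc 8 7 3, arc 8 2 2, arc 8 4 3), (arc 8 7 3, arc 8 2 3, arc 8 5 2), (arc 8 7 3, arc 8 2 4, arc 8 6 1), (arc 8 7 3, arc 8 2 5, {}), (arc 8 7 4, {}, arc 8 3 4), (arc 8 7 4, arc 8 3 1, arc 8 4 3), (arc 8 7 4, arc 8 3 2, arc 8 5 2), (arc 8 7 4, arc 8 3 3, arc 8 6 1), (arc 8 7 4, arc 8 3 4, {}), (arc 8 7 5, {}, arc 8 4 3), (arc 8 7 5, arc 8 4 1, arc 8 5 2), (arc 8 7 5, arc 8 4 2, arc 8 6 1), (arc 8 7 5, arc 8 4 3, {}), (arc 8 7 6, {}, arc 8 5 2), (arc 8 7 6, arc 8 5 1, arc 8 6 1), (arc 8 7 6, arc 8 5 2, {}), (arc 8 7 7, {}, arc 8 6 1), (arc 8 7 7, arc 8 6 1, {}), ({..<8}, {}, {})]"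
  unfolding SPLH_def T6_8 by (simp add: arc_full)

lemma MONO_8: "MONO 8 = [({}, arc 8 0 1), (arc 8 0 1, arc 8 0 2), (arc 8 0 2, arc 8 0 3), (arc 8 0 3, arc 8 0 4), (arc 8 0 4, arc 8 0 5), (arc 8 0 5, arc 8 0 6), (arc 8 0 6, arc 8 0 7), (arc 8 0 7, {..<8}), ({}, arc 8 1 1), (arc 8 1 1, arc 8 1 2), (arc 8 1 2, arc 8 1 3), (arc 8 1 3, arc 8 1 4), (arc 8 1 4, arc 8 1 5), (arc 8 1 5, arc 8 1 6), (arc 8 1 6, arc 8 1 7), (arc 8 1 7, {..<8}), ({}, arc 8 2 1), (arc 8 2 1, arc 8 2 2), (arc 8 2 2, arc 8 2 3), (arc 8 2 3, arc 8 2 4), (arc 8 2 4, arc 8 2 5), (arc 8 2 5, arc 8 2 6), (arc 8 2 6, arc 8 2 7), (arc 8 2 7, {..<8}), ({}, arc 8 3 1), (arc 8 3 1, arc 8 3 2), (arc 8 3 2, arc 8 3 3), (arc 8 3 3, arc 8 3 4), (arc 8 3 4, arc 8 3 5), (arc 8 3 5, arc 8 3 6), (arc 8 3 6, arc 8 3 7), (arc 8 3 7, {..<8}), ({}, arc 8 4 1), (arc 8 4 1, arc 8 4 2), (arc 8 4 2, arc 8 4 3), (arc 8 4 3, arc 8 4 4), (arc 8 4 4, arc 8 4 5), (arc 8 4 5, arc 8 4 6), (arc 8 4 6, arc 8 4 7), (arc 8 4 7, {..<8}), ({}, arc 8 5 1), (arc 8 5 1, arc 8 5 2), (arc 8 5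 2, arc 8 5 3), (arc 8 5 3, arc 8 5 4), (arc 8 5 4, arc 8 5 5), (arc 8 5 5, arc 8 5 6), (arc 8 5 6, arc 8 5 7), (arc 8 5 7, {..<8}), ({}, arc 8 6 1), (arc 8 6 1, arc 8 6 2), (arc 8 6 2, arc 8 6 3), (arc 8 6 3, arc 8 6 4), (arc 8 6 4, arc 8 6 5), (arc 8 6 5, arc 8 6 6), (arc 8 6 6, arc 8 6 7), (arc 8 6 7, {..<8}), ({}, arc 8 7 1), (arc 8 7 1, arc 8 7 2), (arc 8 7 2, arc 8 7 3), (arc 8 7 3, arc 8 7 4), (arc 8 7 4, arc 8 7 5), (arc 8 7 5, arc 8 7 6), (arc 8 7 6, arc 8 7 7), (arc 8 7 7, {..<8}), ({}, arc 8 0 1), (arc 8 1 1, arc 8 0 2), (arc 8 1 2, arc 8 0 3), (arc 8 1 3, arc 8 0 4), (arc 8 1 4, arc 8 0 5), (arc 8 1 5, arc 8 0 6), (arc 8 1 6, arc 8 0 7), (arc 8 1 7, {..<8}), ({}, arc 8 1 1), (arc 8 2 1, arc 8 1 2), (arc 8 2 2, arc 8 1 3), (arc 8 2 3, arc 8 1 4), (arc 8 2 4, arc 8 1 5), (arc 8 2 5, arc 8 1 6), (arc 8 2 6, arc 8 1 7), (arc 8 2 7, {..<8}), ({}, arc 8 2 1), (arc 8 3 1, arc 8 2 2), (arc 8 3 2, arc 8 2 3), (arc 8 3 3, arc 8 2 4), (arc 8 3 4, arc 8 2 5), (arc 8 3 5, arc 8 2 6), (arc 8 3 6, arc 8 2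 7), (arc 8 3 7, {..<8}), ({}, arc 8 3 1), (arc 8 4 1, arc 8 3 2), (arc 8 4 2, arc 8 3 3), (arc 8 4 3, arc 8 3 4), (arc 8 4 4, arc 8 3 5), (arc 8 4 5, arc 8 3 6), (arc 8 4 6, arc 8 3 7), (arc 8 4 7, {..<8}), ({}, arc 8 4 1), (arc 8 5 1, arc 8 4 2), (arc 8 5 2, arc 8 4 3), (arc 8 5 3, arc 8 4 4), (arc 8 5 4, arc 8 4 5), (arc 8 5 5, arc 8 4 6), (arc 8 5 6, arc 8 4 7), (arc 8 5 7, {..<8}), ({}, arc 8 5 1), (arc 8 6 1, arc 8 5 2), (arc 8 6 2, arc 8 5 3), (arc 8 6 3, arc 8 5 4), (arc 8 6 4, arc 8 5 5), (arc 8 6 5, arc 8 5 6), (arc 8 6 6, arc 8 5 7), (arc 8 6 7, {..<8}), ({}, arc 8 6 1), (arc 8 7 1, arc 8 6 2), (arc 8 7 2, arc 8 6 3), (arc 8 7 3, arc 8 6 4), (arc 8 7 4, arc 8 6 5), (arc 8 7 5, arc 8 6 6), (arc 8 7 6, arc 8 6 7), (arc 8 7 7, {..<8}), ({}, arc 8 7 1), (arc 8 0 1, arc 8 7 2), (arc 8 0 2, arc 8 7 3), (arc 8 0 3, arc 8 7 4), (arc 8 0 4, arc 8 7 5), (arc 8 0 5, arc 8 7 6), (arc 8 0 6, arc 8 7 7), (arc 8 0 7, {..<8})]"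
  unfolding MONO_alt MP_8 by (simp add: arc_full)

lemma COMB_8: "COMB 8"
  unfolding COMB_def
  apply (intro allI impI)
  subgoal for A0 A1 A2
    using T3_all[of A0 "SPLH 8"] T3_all[of A1 "SPLH 8"] T3_all[of A2 "SPLH 8"]
    unfolding HYP_def SPL_8 SPLH_8 MONO_8 list_ex_Nil_iff list_ex_Cons_iff list_all_Nil_iff list_all_Cons_iff prod.case
    by satx
  done


theorem theorem2p4:
  fixes m :: nat and us :: "nat \<Rightarrow> nat \<Rightarrow> real"
  assumes "m \<le> 8"
    and "\<And>i g. i < 3 \<Longrightarrow> g < m \<Longrightarrow> us i g \<ge> 0"
  shows "\<exists>P. is_mms_allocation m 3 us P"
proof (cases "m = 0")
  case True thus ?thesis using zero_case by simp
next
  case False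
  hence m0: "0 < m" by simp
  have "m = 1 \<or> m = 2 \<or> m = 3 \<or> m = 4 \<or> m = 5 \<or> m = 6 \<or> m = 7 \<or> m = 8"
    using assms(1) False by linarith
  hence c: "COMB m" using COMB_1 COMB_2 COMB_3 COMB_4 COMB_5 COMB_6 COMB_7 COMB_8 by blast
  show ?thesis by (rule final_step[OF c m0 assms(2)])
qed

end
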